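(* Let $0<\varepsilon\le1$ and let $\mathfrak{K}_\varepsilon$ be the linear span of $\{x^n e^{-x^2/(2\sqrt\varepsilon)} : n\in\{0,1,2,\dots\}\}$. Then $\mathfrak{K}_\varepsilon\cap D(S_\varepsilon)=\{0\}$ and $\mathfrak{K}_\varepsilon\cap D(S^*_\varepsilon)=\{0\}$.
   Context: Work in $L^2(\mathbb{R})$ with inner product $(f,g)=\int\overline{f}g\,dx$. Let $q$ be multiplication by $x$ and $p=-i\,d/dx$ (both self-adjoint; $q$ injective). Let $t=q^{-1}p$ with $D(t)=\{f\in D(p): pf\in D(q^{-1})\}$, and $t^*$ its adjoint. Let $L^2_0$ and $L^2_1$ be the subspaces of even and odd functions. Define $S_\varepsilon$ in $L^2_0$ by $D(S_\varepsilon)=\{f\in L^2_0\cap\bigcap_{n\ge0}D(t^{2n+1}): \lim_{N\to\infty}\sum_{n=0}^N\frac{(-1)^n}{2n+1}(\sqrt\varepsilon t)^{2n+1}f$ exists in norm$\}$ and $S_\varepsilon f=-\varepsilon^{-1/2}\sum_{n=0}^\infty\frac{(-1)^n}{2n+1}(\sqrt\varepsilon t)^{2n+1}f$. Define $S^*_\varepsilon$ (notation only, not an adjoint) in $L^2_1$ by the same formulas with $t$ replaced by $t^*$ and $L^2_0$ replaced by $L^2_1$. *)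

theory Defs
  imports "HOL-Analysis.Analysis"
begin

text \<open>Elements of L2(R) are represented by functions real => complex (Borel measurable,
  square integrable); two functions represent the same element iff they agree a.e.
  Unbounded operators are represented by their graphs (relations on representatives).\<close>

type_synonym cfun = "real \<Rightarrow> complex"

definition L2 :: "cfun \<Rightarrow> bool" where
  "L2 f \<longleftrightarrow> f \<in> borel_measurable lborel \<and> integrable lborel (\<lambda>x. (cmod (f x))\<^sup>2)"

definition L2_inner :: "cfun \<Rightarrow> cfun \<Rightarrow> complex" where
  "L2_inner f g = (LINT x|lborel. cnj (f x) * g x)"

definition L2_tendsto :: "(nat \<Rightarrow> cfun) \<Rightarrow> cfun \<Rightarrow> bool" where
  "L2_tendsto s l \<longleftrightarrow> ((\<lambda>N. sqrt (LINT x|lborel. (cmod (s N x - l x))\<^sup>2)) \<longlonglongrightarrow> 0)"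

definition L2_even :: "cfun \<Rightarrow> bool" where
  "L2_even f \<longleftrightarrow> L2 f \<and> (AE x in lborel. f (- x) = f x)"

definition L2_odd :: "cfun \<Rightarrow> bool" where
  "L2_odd f \<longleftrightarrow> L2 f \<and> (AE x in lborel. f (- x) = - f x)"

text \<open>Graph of p = -i d/dx on its self-adjoint domain H^1(R): f has a locally absolutely
  continuous representative u with u(x) = u(0) + int_0^x w, w in L2, and p f = -i w.\<close>
definition p_graph :: "(cfun \<times> cfun) set" where
  "p_graph = {(f, g). L2 f \<and> L2 g \<and>
     (\<exists>u w. L2 w \<and> (AE x in lborel. f x = u x) \<and>
        (\<forall>x. u x = u 0 + (LBINT y=0..x. w y)) \<and>
        (AE x in lborel. g x = - \<i> * w x))}"

definition qinv_graph :: "(cfun \<times> cfun) set" where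
  "qinv_graph = {(h, k). L2 h \<and> L2 k \<and> (AE x in lborel. k x = h x / complex_of_real x)}"

text \<open>t = q^{-1} p with D(t) = {f in D(p) : pf in D(q^{-1})}.\<close>
definition t_graph :: "(cfun \<times> cfun) set" where
  "t_graph = p_graph O qinv_graph"

definition t_adj_graph :: "(cfun \<times> cfun) set" where
  "t_adj_graph = {(g, h). L2 g \<and> L2 h \<and>
     (\<forall>f k. (f, k) \<in> t_graph \<longrightarrow> L2_inner g k = L2_inner h f)}"

text \<open>Domain of S_eps built from operator T (t or t^*) in subspace H (L2_0 or L2_1):
  f in H, f in D(T^(2n+1)) for all n (with values v n), and the partial sums of
  sum (-1)^n/(2n+1) (sqrt eps T)^(2n+1) f converge in norm.\<close>
definition S_dom :: "(cfun \<times> cfun) set \<Rightarrow> (cfun \<Rightarrow> bool) \<Rightarrow> real \<Rightarrow> cfun set" where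
  "S_dom T H \<epsilon> = {f. H f \<and>
     (\<exists>v. (\<forall>n. (f, v n) \<in> T ^^ (2 * n + 1)) \<and>
        (\<exists>l. L2 l \<and> L2_tendsto
           (\<lambda>N x. \<Sum>n\<le>N. complex_of_real ((-1) ^ n / real (2 * n + 1) * sqrt \<epsilon> ^ (2 * n + 1)) * v n x) l))}"

definition K_space :: "real \<Rightarrow> cfun set" where
  "K_space \<epsilon> = {f. \<exists>N (c :: nat \<Rightarrow> complex). f = (\<lambda>x. \<Sum>n<N. c n * complex_of_real (x ^ n * exp (- (x\<^sup>2) / (2 * sqrt \<epsilon>))))}"

end

theory Submission
  imports Defs "HOL-Probability.Distributions" "HOL-Computational_Algebra.Polynomial"
begin


lemma borel_measurable_cnj' [measurable]:
  "f \<in> borel_measurable M \<Longrightarrow> (\<lambda>x. cnj (f x)) \<in> borel_measurable M"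
  by (rule borel_measurable_continuous_on[where f=cnj]) (auto intro: continuous_intros)

lemma L2_meas: "L2 f \<Longrightarrow> f \<in> borel_measurable lborel"
  by (simp add: L2_def)

lemma L2_sq: "L2 f \<Longrightarrow> integrable lborel (\<lambda>x. (cmod (f x))\<^sup>2)"
  by (simp add: L2_def)

lemma L2_inner_integrable:
  assumes "L2 f" "L2 g"
  shows "integrable lborel (\<lambda>x. cnj (f x) * g x)"
proof (rule Bochner_Integration.integrable_bound)
  show "integrable lborel (\<lambda>x. ((cmod (f x))\<^sup>2 + (cmod (g x))\<^sup>2) / 2)"
    using assms by (auto simp: L2_def)
  have [measurable]: "f \<in> borel_measurable lborel" "g \<in> borel_measurable lborel"
    using assms by (auto simp: L2_def)
  show "(\<lambda>x. cnj (f x) * g x) \<in> borel_measurable lborel"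
    by measurable
  show "AE x in lborel. norm (cnj (f x) * g x) \<le> norm (((cmod (f x))\<^sup>2 + (cmod (g x))\<^sup>2) / 2)"
  proof (intro AE_I2)
    fix x
    have "norm (cnj (f x) * g x) = cmod (f x) * cmod (g x)" by (simp add: norm_mult)
    also have "\<dots> \<le> ((cmod (f x))\<^sup>2 + (cmod (g x))\<^sup>2) / 2"
      using sum_squares_bound[of "cmod (f x)" "cmod (g x)"] by (simp add: power2_eq_square field_simps)
    finally show "norm (cnj (f x) * g x) \<le> norm (((cmod (f x))\<^sup>2 + (cmod (g x))\<^sup>2) / 2)" by simp
  qed
qed

lemma L2_cong_AE:
  assumes "L2 f" "g \<in> borel_measurable lborel" "AE x in lborel. f x = g x"
  shows "L2 g"
proof -
  have "integrable lborel (\<lambda>x. (cmod (g x))\<^sup>2)"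
    using assms by (intro integrable_cong_AE[THEN iffD1, OF _ _ _ L2_sq[OF assms(1)]]) (auto simp: L2_def)
  then show ?thesis using assms by (simp add: L2_def)
qed

lemma L2_bound:
  assumes "L2 f" "g \<in> borel_measurable lborel" "AE x in lborel. cmod (g x) \<le> C * cmod (f x)"
  shows "L2 g"
proof -
  have "integrable lborel (\<lambda>x. (cmod (g x))\<^sup>2)"
  proof (rule Bochner_Integration.integrable_bound)
    show "integrable lborel (\<lambda>x. C\<^sup>2 * (cmod (f x))\<^sup>2)" using assms by (auto simp: L2_def)
    show "(\<lambda>x. (cmod (g x))\<^sup>2) \<in> borel_measurable lborel" using assms(2) by measurable
    show "AE x in lborel. norm ((cmod (g x))\<^sup>2) \<le> norm (C\<^sup>2 * (cmod (f x))\<^sup>2)"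
      using assms(3)
    proof eventually_elim
      case (elim x)
      then have "(cmod (g x))\<^sup>2 \<le> (C * cmod (f x))\<^sup>2"
        by (intro power_mono) auto
      then show ?case by (simp add: power_mult_distrib)
    qed
  qed
  then show ?thesis using assms by (simp add: L2_def)
qed

lemma L2_add:
  assumes "L2 f" "L2 g" shows "L2 (\<lambda>x. f x + g x)"
proof -
  have [measurable]: "f \<in> borel_measurable lborel" "g \<in> borel_measurable lborel"
    using assms by (auto simp: L2_def)
  have "integrable lborel (\<lambda>x. (cmod (f x + g x))\<^sup>2)"
  proof (rule Bochner_Integration.integrable_bound)
    show "integrable lborel (\<lambda>x. 2 * (cmod (f x))\<^sup>2 + 2 * (cmod (g x))\<^sup>2)" using assms by (auto simp: L2_def)
    show "(\<lambda>x. (cmod (f x + g x))\<^sup>2) \<in> borel_measurable lborel" by measurable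
    show "AE x in lborel. norm ((cmod (f x + g x))\<^sup>2) \<le> norm (2 * (cmod (f x))\<^sup>2 + 2 * (cmod (g x))\<^sup>2)"
    proof (intro AE_I2)
      fix x
      have "cmod (f x + g x) \<le> cmod (f x) + cmod (g x)" by (rule norm_triangle_ineq)
      then have "(cmod (f x + g x))\<^sup>2 \<le> (cmod (f x) + cmod (g x))\<^sup>2" by (intro power_mono) auto
      also have "\<dots> \<le> 2 * (cmod (f x))\<^sup>2 + 2 * (cmod (g x))\<^sup>2"
      proof -
        have "0 \<le> (cmod (f x) - cmod (g x))\<^sup>2" by simp
        then show ?thesis by (simp add: power2_eq_square algebra_simps)
      qed
      finally show "norm ((cmod (f x + g x))\<^sup>2) \<le> norm (2 * (cmod (f x))\<^sup>2 + 2 * (cmod (g x))\<^sup>2)" by simp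
    qed
  qed
  then show ?thesis by (simp add: L2_def)
qed

lemma L2_scale:
  assumes "L2 f" shows "L2 (\<lambda>x. c * f x)"
proof -
  have [measurable]: "f \<in> borel_measurable lborel" using assms by (simp add: L2_def)
  show ?thesis using assms by (rule L2_bound[where C="cmod c"]) (auto simp: norm_mult)
qed

lemma L2_neg:
  assumes "L2 f" shows "L2 (\<lambda>x. - f x)"
  using L2_scale[OF assms, of "-1"] by simp

lemma L2_diff:
  assumes "L2 f" "L2 g" shows "L2 (\<lambda>x. f x - g x)"
  using L2_add[OF assms(1) L2_neg[OF assms(2)]] by simp

lemma L2_zero: "L2 (\<lambda>x. 0)"
  by (simp add: L2_def)

lemma L2_sum:
  assumes "\<And>i. i \<in> I \<Longrightarrow> L2 (f i)" shows "L2 (\<lambda>x. \<Sum>i\<in>I. f i x)"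
  using assms
proof (induction I rule: infinite_finite_induct)
  case (insert i I)
  then show ?case using L2_add[of "f i" "\<lambda>x. \<Sum>i\<in>I. f i x"] by simp
qed (auto simp: L2_zero)

lemma L2_set_integrable:
  assumes "L2 w"
  shows "set_integrable lborel {a..b} w"
proof -
  have [measurable]: "w \<in> borel_measurable lborel" using assms by (simp add: L2_def)
  have "integrable lborel (\<lambda>x. indicator {a..b} x *\<^sub>R w x)"
  proof (rule Bochner_Integration.integrable_bound)
    show "integrable lborel (\<lambda>x. indicator {a..b} x + (cmod (w x))\<^sup>2)"
      using assms by (intro Bochner_Integration.integrable_add integrable_real_indicator) (auto simp: L2_def emeasure_lborel_Icc_eq)
    show "(\<lambda>x. indicator {a..b} x *\<^sub>R w x) \<in> borel_measurable lborel" by measurable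
    show "AE x in lborel. norm (indicator {a..b} x *\<^sub>R w x) \<le> norm (indicator {a..b} x + (cmod (w x))\<^sup>2 :: real)"
    proof (intro AE_I2)
      fix x
      have "cmod (w x) \<le> 1 + (cmod (w x))\<^sup>2"
      proof -
        have "0 \<le> (cmod (w x) - 1)\<^sup>2" by simp
        then have "2 * cmod (w x) \<le> 1 + (cmod (w x))\<^sup>2" by (simp add: power2_eq_square algebra_simps)
        then show ?thesis using norm_ge_zero[of "w x"] by linarith
      qed
      then show "norm (indicator {a..b} x *\<^sub>R w x) \<le> norm (indicator {a..b} x + (cmod (w x))\<^sup>2 :: real)"
        by (auto simp: indicator_def)
    qed
  qed
  then show ?thesis by (simp add: set_integrable_def)
qed


lemma real_ae_zero_halflines:
  fixes h :: "real \<Rightarrow> real"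
  assumes h: "integrable lborel h" and z: "\<And>x. (\<integral>y. indicator {x<..} y * h y \<partial>lborel) = 0"
  shows "AE x in lborel. h x = 0"
proof -
  have [measurable]: "h \<in> borel_measurable lborel" using h by auto
  define M where "M = density lborel (\<lambda>x. ennreal (max 0 (h x)))"
  define N where "N = density lborel (\<lambda>x. ennreal (max 0 (- h x)))"
  have ip: "integrable lborel (\<lambda>x. max 0 (h x))" and ineg: "integrable lborel (\<lambda>x. max 0 (- h x))"
    using h by (auto intro!: integrable_max)
  have eM: "emeasure M A = ennreal (\<integral>y. indicator A y * max 0 (h y) \<partial>lborel)" if [measurable]: "A \<in> sets borel" for A
  proof -
    have "emeasure M A = (\<integral>\<^sup>+x. ennreal (indicator A x * max 0 (h x)) \<partial>lborel)"
      unfolding M_def by (subst emeasure_density) (auto intro!: nn_integral_cong simp: indicator_def)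
    also have "\<dots> = ennreal (\<integral>y. indicator A y * max 0 (h y) \<partial>lborel)"
      using integrable_real_mult_indicator[OF _ ip, of A] by (intro nn_integral_eq_integral) (auto simp: mult.commute)
    finally show ?thesis .
  qed
  have eN: "emeasure N A = ennreal (\<integral>y. indicator A y * max 0 (- h y) \<partial>lborel)" if [measurable]: "A \<in> sets borel" for A
  proof -
    have "emeasure N A = (\<integral>\<^sup>+x. ennreal (indicator A x * max 0 (- h x)) \<partial>lborel)"
      unfolding N_def by (subst emeasure_density) (auto intro!: nn_integral_cong simp: indicator_def)
    also have "\<dots> = ennreal (\<integral>y. indicator A y * max 0 (- h y) \<partial>lborel)"
      using integrable_real_mult_indicator[OF _ ineg, of A] by (intro nn_integral_eq_integral) (auto simp: mult.commute)
    finally show ?thesis .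
  qed
  have "M = N"
  proof (rule measure_eqI_lessThan)
    show "sets M = sets borel" "sets N = sets borel" by (simp_all add: M_def N_def)
    show "emeasure M {x<..} < \<infinity>" for x by (simp add: eM)
    show "emeasure M {x<..} = emeasure N {x<..}" for x
    proof -
      have "(\<integral>y. indicator {x<..} y * max 0 (h y) \<partial>lborel) - (\<integral>y. indicator {x<..} y * max 0 (- h y) \<partial>lborel)
          = (\<integral>y. indicator {x<..} y * max 0 (h y) - indicator {x<..} y * max 0 (- h y) \<partial>lborel)"
        using integrable_real_mult_indicator[OF _ ip, of "{x<..}"] integrable_real_mult_indicator[OF _ ineg, of "{x<..}"]
        by (intro Bochner_Integration.integral_diff[symmetric]) (auto simp: mult.commute)
      also have "\<dots> = (\<integral>y. indicator {x<..} y * h y \<partial>lborel)"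
        by (intro Bochner_Integration.integral_cong) (auto simp: indicator_def max_def)
      finally show ?thesis using z[of x] by (simp add: eM eN)
    qed
  qed
  then have "AE x in lborel. ennreal (max 0 (h x)) = ennreal (max 0 (- h x))"
    unfolding M_def N_def
    by (intro sigma_finite_measure.density_unique[OF lborel.sigma_finite_measure_axioms]) auto
  then show ?thesis
    by eventually_elim (auto simp: max_def split: if_splits)
qed

lemma complex_ae_zero_halflines:
  fixes h :: "real \<Rightarrow> complex"
  assumes h: "integrable lborel h" and z: "\<And>x. (\<integral>y. indicator {x<..} y *\<^sub>R h y \<partial>lborel) = 0"
  shows "AE x in lborel. h x = 0"
proof -
  have ih: "integrable lborel (\<lambda>y. indicator {x<..} y *\<^sub>R h y)" for x
    using h by (intro integrable_mult_indicator) auto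
  have "AE x in lborel. Re (h x) = 0"
  proof (rule real_ae_zero_halflines)
    show "integrable lborel (\<lambda>x. Re (h x))" using h by auto
    fix x
    have "(\<integral>y. indicator {x<..} y * Re (h y) \<partial>lborel) = (\<integral>y. Re (indicator {x<..} y *\<^sub>R h y) \<partial>lborel)"
      by (intro Bochner_Integration.integral_cong) auto
    also have "\<dots> = Re (\<integral>y. indicator {x<..} y *\<^sub>R h y \<partial>lborel)"
      by (rule integral_Re[OF ih])
    finally show "(\<integral>y. indicator {x<..} y * Re (h y) \<partial>lborel) = 0" using z[of x] by simp
  qed
  moreover have "AE x in lborel. Im (h x) = 0"
  proof (rule real_ae_zero_halflines)
    show "integrable lborel (\<lambda>x. Im (h x))" using h by auto
    fix x
    have "(\<integral>y. indicator {x<..} y * Im (h y) \<partial>lborel) = (\<integral>y. Im (indicator {x<..} y *\<^sub>R h y) \<partial>lborel)"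
      by (intro Bochner_Integration.integral_cong) auto
    also have "\<dots> = Im (\<integral>y. indicator {x<..} y *\<^sub>R h y \<partial>lborel)"
      by (rule integral_Im[OF ih])
    finally show "(\<integral>y. indicator {x<..} y * Im (h y) \<partial>lborel) = 0" using z[of x] by simp
  qed
  ultimately show ?thesis by eventually_elim (simp add: complex_eq_iff)
qed

lemma ae_zero_from_intervals:
  fixes d :: "real \<Rightarrow> complex"
  assumes int: "set_integrable lborel {c<..<R} d"
  and zero: "\<And>a b. c \<le> a \<Longrightarrow> a < b \<Longrightarrow> b \<le> R \<Longrightarrow> (LINT x:{a<..<b}|lborel. d x) = 0"
  shows "AE x in lborel. c < x \<longrightarrow> x < R \<longrightarrow> d x = 0"
proof -
  define h where "h = (\<lambda>x. indicator {c<..<R} x *\<^sub>R d x)"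
  have hi: "integrable lborel h" using int by (simp add: h_def set_integrable_def)
  have "AE x in lborel. h x = 0"
  proof (rule complex_ae_zero_halflines[OF hi])
    fix x
    have eq: "(\<lambda>y. indicator {x<..} y *\<^sub>R h y) = (\<lambda>y. indicator {max x c<..<R} y *\<^sub>R d y)"
      by (auto simp: h_def indicator_def fun_eq_iff)
    show "(\<integral>y. indicator {x<..} y *\<^sub>R h y \<partial>lborel) = 0"
    proof (cases "max x c < R")
      case True
      then show ?thesis using zero[of "max x c" R] by (simp add: eq set_lebesgue_integral_def)
    next
      case False
      then have "{max x c<..<R} = {}" by auto
      then show ?thesis by (simp add: eq)
    qed
  qed
  then show ?thesis by eventually_elim (auto simp: h_def indicator_def)
qed

lemma cont_ae_eq_imp_eq:
  fixes f g :: "real \<Rightarrow> complex"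
  assumes "continuous_on UNIV f" "continuous_on UNIV g" "AE x in lborel. f x = g x"
  shows "f x = g x"
proof (rule ccontr)
  assume ne: "f x \<noteq> g x"
  define S where "S = {x. f x \<noteq> g x}"
  have "open S" unfolding S_def using assms(1,2)
    by (intro open_Collect_neq) (auto simp: continuous_on_eq_continuous_at)
  have [measurable]: "f \<in> borel_measurable borel" "g \<in> borel_measurable borel"
    using assms by (auto intro: borel_measurable_continuous_onI)
  have Ssets: "S \<in> sets lborel" unfolding S_def by measurable
  have "emeasure lborel S = 0"
    using assms(3) by (subst AE_iff_measurable[symmetric, OF Ssets]) (auto simp: S_def)
  then have "S \<in> null_sets lborel" using Ssets by auto
  then have "S \<in> null_sets lebesgue" by (rule null_sets_completionI)
  then have "negligible S" by (simp add: negligible_iff_null_sets)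
  moreover have "S \<noteq> {}" using ne by (auto simp: S_def)
  ultimately show False using open_not_negligible[OF \<open>open S\<close>] by auto
qed


lemma L2_interval_integrable:
  assumes "L2 w"
  shows "interval_lebesgue_integrable lborel (ereal a) (ereal b) w"
proof -
  have "set_integrable lborel {min a b..max a b} w" by (rule L2_set_integrable[OF assms])
  then have "set_integrable lborel {min a b<..<max a b} w"
    by (rule set_integrable_subset) auto
  then show ?thesis
    by (auto simp: interval_lebesgue_integrable_def min_def max_def split: if_splits)
qed

lemma L2_LBINT_sum:
  assumes "L2 w"
  shows "(LBINT y=ereal a..ereal b. w y) + (LBINT y=ereal b..ereal c. w y) = (LBINT y=ereal a..ereal c. w y)"
proof (rule interval_integral_sum)
  have e1: "min (ereal a) (min (ereal b) (ereal c)) = ereal (min a (min b c))"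
       and e2: "max (ereal a) (max (ereal b) (ereal c)) = ereal (max a (max b c))" by auto
  show "interval_lebesgue_integrable lborel (min (ereal a) (min (ereal b) (ereal c))) (max (ereal a) (max (ereal b) (ereal c))) w"
    unfolding e1 e2 by (rule L2_interval_integrable[OF assms])
qed

lemma LBINT_cont:
  assumes "L2 w"
  shows "continuous_on UNIV (\<lambda>x::real. LBINT y=0..ereal x. w y)"
proof (intro continuous_at_imp_continuous_on ballI)
  fix x :: real
  define R where "R = \<bar>x\<bar> + 1"
  have wi: "w integrable_on {-R..R}"
    using set_borel_integral_eq_integral(1)[OF L2_set_integrable[OF assms]] .
  have c1: "continuous_on {-R..R} (\<lambda>z. integral {-R..z} w)"
    by (rule indefinite_integral_continuous_1[OF wi])
  have eq: "(LBINT y=0..ereal z. w y) = integral {-R..z} w - (LBINT y=ereal (-R)..ereal 0. w y)"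
    if "z \<in> {-R..R}" for z
  proof -
    have "(LBINT y=ereal (-R)..ereal z. w y) = integral {-R..z} w"
      using that by (intro interval_integral_eq_integral L2_set_integrable[OF assms]) auto
    moreover have "(LBINT y=ereal (-R)..ereal 0. w y) + (LBINT y=ereal 0..ereal z. w y) = (LBINT y=ereal (-R)..ereal z. w y)"
      by (rule L2_LBINT_sum[OF assms])
    ultimately show ?thesis by (simp add: zero_ereal_def algebra_simps)
  qed
  have "continuous_on {-R..R} (\<lambda>z::real. LBINT y=0..ereal z. w y)"
    by (rule continuous_on_eq[OF continuous_on_diff[OF c1 continuous_on_const]]) (use eq in auto)
  moreover have "x \<in> interior {-R..R}" by (auto simp: R_def)
  ultimately show "isCont (\<lambda>z::real. LBINT y=0..ereal z. w y) x"
    using continuous_on_interior by blast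
qed

lemma FTC_LBINT:
  fixes F f :: "real \<Rightarrow> complex"
  assumes S: "finite S" and Fc: "continuous_on UNIV F"
    and Fd: "\<And>x. x \<notin> S \<Longrightarrow> (F has_vector_derivative f x) (at x)"
    and fi: "\<And>a b. set_integrable lborel {a..b} f"
  shows "(LBINT y=ereal a..ereal b. f y) = F b - F a"
proof -
  have main: "(LBINT y=ereal a..ereal b. f y) = F b - F a" if "a \<le> b" for a b
  proof -
    have "(f has_integral F b - F a) {a..b}"
      by (rule fundamental_theorem_of_calculus_interior_strong[OF S that])
         (auto intro: Fd continuous_on_subset[OF Fc])
    moreover have "(LBINT y=ereal a..ereal b. f y) = integral {a..b} f"
      using that fi by (intro interval_integral_eq_integral) auto
    ultimately show ?thesis by (simp add: integral_unique)
  qed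
  show ?thesis
  proof (cases "a \<le> b")
    case True then show ?thesis by (rule main)
  next
    case False
    then have "(LBINT y=ereal b..ereal a. f y) = F a - F b" by (intro main) auto
    then show ?thesis by (subst interval_integral_endpoints_reverse) simp
  qed
qed

lemma gauss_moment_integrable:
  assumes "0 < c"
  shows "integrable lborel (\<lambda>x::real. \<bar>x\<bar> ^ k * exp (- (x\<^sup>2) / c))"
proof -
  define \<sigma> where "\<sigma> = sqrt (c / 2)"
  have sp: "0 < \<sigma>" using assms by (simp add: \<sigma>_def)
  have s2: "c = 2 * \<sigma>\<^sup>2" using assms by (simp add: \<sigma>_def)
  have nz: "sqrt (2 * pi * \<sigma>\<^sup>2) \<noteq> 0" using sp by simp
  have "integrable lborel (\<lambda>x. normal_density 0 \<sigma> x * \<bar>x - 0\<bar> ^ k)"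
    by (rule integrable_normal_moment_abs[OF sp])
  then have "integrable lborel (\<lambda>x. sqrt (2 * pi * \<sigma>\<^sup>2) * (normal_density 0 \<sigma> x * \<bar>x - 0\<bar> ^ k))"
    by (rule integrable_mult_right)
  moreover have "(\<lambda>x. sqrt (2 * pi * \<sigma>\<^sup>2) * (normal_density 0 \<sigma> x * \<bar>x - 0\<bar> ^ k)) = (\<lambda>x. \<bar>x\<bar> ^ k * exp (- (x\<^sup>2) / (2 * \<sigma>\<^sup>2)))"
    using nz unfolding normal_density_def by (intro ext) simp
  ultimately show ?thesis unfolding s2 by (simp only:)
qed


definition gs :: "real \<Rightarrow> real \<Rightarrow> complex" where
  "gs a x = complex_of_real (exp (- (x\<^sup>2) / (2 * a)))"
definition Ef :: "nat \<Rightarrow> real \<Rightarrow> complex poly \<Rightarrow> real \<Rightarrow> complex" where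
  "Ef s a P x = complex_of_real x ^ s * poly P (complex_of_real (x\<^sup>2)) * gs a x"
definition Dop :: "real \<Rightarrow> complex poly \<Rightarrow> complex poly" where
  "Dop a P = smult 2 (pderiv P) - smult (complex_of_real (1 / a)) P"
definition Mop :: "real \<Rightarrow> complex poly \<Rightarrow> complex poly" where
  "Mop a P = smult (- \<i>) (Dop a P)"

lemma Ef_deriv:
  assumes "0 < a"
  shows "(Ef 0 a P has_vector_derivative Ef 1 a (Dop a P) x) (at x)"
proof -
  define c where "c = complex_of_real a"
  have c0: "c \<noteq> 0" using assms by (simp add: c_def)
  define H where "H z = poly P (z\<^sup>2) * exp (- (z\<^sup>2) / (2 * c))" for z
  have dH: "(H has_field_derivative (z * poly (Dop a P) (z\<^sup>2) * exp (- (z\<^sup>2) / (2 * c)))) (at z)" for z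
  proof -
    have d1: "((\<lambda>z. poly P (z\<^sup>2)) has_field_derivative poly (pderiv P) (z\<^sup>2) * (2 * z)) (at z)"
      by (rule DERIV_chain2[OF poly_DERIV]) (auto intro!: derivative_eq_intros)
    have d2: "((\<lambda>z. exp (- (z\<^sup>2) / (2 * c))) has_field_derivative exp (- (z\<^sup>2) / (2 * c)) * (- z / c)) (at z)"
      by (rule DERIV_chain2[OF DERIV_exp]) (auto intro!: derivative_eq_intros simp: c0 field_simps)
    have "(H has_field_derivative poly (pderiv P) (z\<^sup>2) * (2 * z) * exp (- (z\<^sup>2) / (2 * c)) + exp (- (z\<^sup>2) / (2 * c)) * (- z / c) * poly P (z\<^sup>2)) (at z)"
      unfolding H_def by (rule DERIV_mult[OF d1 d2])
    moreover have "poly (pderiv P) (z\<^sup>2) * (2 * z) * exp (- (z\<^sup>2) / (2 * c)) + exp (- (z\<^sup>2) / (2 * c)) * (- z / c) * poly P (z\<^sup>2)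
        = z * poly (Dop a P) (z\<^sup>2) * exp (- (z\<^sup>2) / (2 * c))"
      using c0 by (simp add: Dop_def c_def field_simps)
    ultimately show ?thesis by simp
  qed
  have eqH: "Ef 0 a P = (\<lambda>x. H (of_real x))"
    by (auto simp: Ef_def gs_def H_def c_def fun_eq_iff exp_of_real[symmetric])
  have "((\<lambda>x. H (of_real x)) has_vector_derivative (of_real x * poly (Dop a P) ((of_real x)\<^sup>2) * exp (- ((of_real x)\<^sup>2) / (2 * c)))) (at x)"
    by (rule has_vector_derivative_real_field[OF dH])
  moreover have "of_real x * poly (Dop a P) ((of_real x)\<^sup>2) * exp (- ((of_real x)\<^sup>2) / (2 * c)) = Ef 1 a (Dop a P) x"
    by (simp add: Ef_def gs_def c_def exp_of_real[symmetric])
  ultimately show ?thesis unfolding eqH by simp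
qed

lemma Ef_cont0: "0 < a \<Longrightarrow> continuous_on UNIV (Ef 0 a P)"
  by (intro continuous_at_imp_continuous_on ballI has_vector_derivative_continuous[OF Ef_deriv]) auto

lemma Ef1_eq: "Ef 1 a P x = complex_of_real x * Ef 0 a P x"
  by (simp add: Ef_def)

lemma Ef_cont: "0 < a \<Longrightarrow> continuous_on UNIV (Ef s a P)"
proof -
  assume a: "0 < a"
  have "Ef s a P = (\<lambda>x. complex_of_real x ^ s * Ef 0 a P x)"
    by (auto simp: Ef_def fun_eq_iff)
  then show ?thesis using Ef_cont0[OF a]
    by (auto intro!: continuous_intros)
qed

lemma Ef_meas [measurable]: "0 < a \<Longrightarrow> Ef s a P \<in> borel_measurable borel"
  by (rule borel_measurable_continuous_onI[OF Ef_cont])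

lemma poly_bound:
  fixes Q :: "complex poly"
  shows "cmod (poly Q (complex_of_real x)) \<le> (\<Sum>i\<le>degree Q. cmod (coeff Q i)) * (1 + \<bar>x\<bar> ^ degree Q)"
proof -
  have "cmod (poly Q (complex_of_real x)) = cmod (\<Sum>i\<le>degree Q. coeff Q i * complex_of_real x ^ i)"
    by (simp add: poly_altdef)
  also have "\<dots> \<le> (\<Sum>i\<le>degree Q. cmod (coeff Q i * complex_of_real x ^ i))"
    by (rule norm_sum)
  also have "\<dots> \<le> (\<Sum>i\<le>degree Q. cmod (coeff Q i) * (1 + \<bar>x\<bar> ^ degree Q))"
  proof (intro sum_mono)
    fix i assume "i \<in> {..degree Q}"
    then have i: "i \<le> degree Q" by simp
    have "\<bar>x\<bar> ^ i \<le> 1 + \<bar>x\<bar> ^ degree Q"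
    proof (cases "\<bar>x\<bar> \<le> 1")
      case True
      then have "\<bar>x\<bar> ^ i \<le> 1" by (simp add: power_le_one)
      then show ?thesis by (smt (verit) zero_le_power abs_ge_zero)
    next
      case False
      then have "\<bar>x\<bar> ^ i \<le> \<bar>x\<bar> ^ degree Q" using i by (intro power_increasing) auto
      then show ?thesis by simp
    qed
    then show "cmod (coeff Q i * complex_of_real x ^ i) \<le> cmod (coeff Q i) * (1 + \<bar>x\<bar> ^ degree Q)"
      by (simp add: norm_mult norm_power mult_left_mono)
  qed
  also have "\<dots> = (\<Sum>i\<le>degree Q. cmod (coeff Q i)) * (1 + \<bar>x\<bar> ^ degree Q)"
    by (simp add: sum_distrib_right)
  finally show ?thesis .
qed

definition Qs :: "nat \<Rightarrow> complex poly \<Rightarrow> complex poly" where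
  "Qs s P = [:0, 1:] ^ s * pcompose P [:0, 0, 1:]"

lemma Ef_Qs: "Ef s a P x = poly (Qs s P) (complex_of_real x) * gs a x"
  by (simp add: Ef_def Qs_def poly_pcompose power2_eq_square)

lemma L2_polyg:
  fixes Q :: "complex poly"
  assumes a: "0 < a" and m [measurable]: "(\<lambda>x. poly Q (complex_of_real x) * gs a x) \<in> borel_measurable lborel"
  shows "L2 (\<lambda>x. poly Q (complex_of_real x) * gs a x)"
proof -
  define C where "C = (\<Sum>i\<le>degree Q. cmod (coeff Q i))"
  define d where "d = degree Q"
  have C0: "0 \<le> C" by (simp add: C_def sum_nonneg)
  have "integrable lborel (\<lambda>x. (cmod (poly Q (complex_of_real x) * gs a x))\<^sup>2)"
  proof (rule Bochner_Integration.integrable_bound)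
    show "integrable lborel (\<lambda>x. 2 * C\<^sup>2 * (\<bar>x\<bar> ^ 0 * exp (- (x\<^sup>2) / a)) + 2 * C\<^sup>2 * (\<bar>x\<bar> ^ (2 * d) * exp (- (x\<^sup>2) / a)))"
      using a by (intro Bochner_Integration.integrable_add integrable_mult_right gauss_moment_integrable)
    show "(\<lambda>x. (cmod (poly Q (complex_of_real x) * gs a x))\<^sup>2) \<in> borel_measurable lborel" by measurable
    show "AE x in lborel. norm ((cmod (poly Q (complex_of_real x) * gs a x))\<^sup>2) \<le>
        norm (2 * C\<^sup>2 * (\<bar>x\<bar> ^ 0 * exp (- (x\<^sup>2) / a)) + 2 * C\<^sup>2 * (\<bar>x\<bar> ^ (2 * d) * exp (- (x\<^sup>2) / a)))"
    proof (intro AE_I2)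
      fix x
      have pb: "cmod (poly Q (complex_of_real x)) \<le> C * (1 + \<bar>x\<bar> ^ d)"
        using poly_bound[of Q x] by (simp add: C_def d_def)
      have g2: "(cmod (gs a x))\<^sup>2 = exp (- (x\<^sup>2) / a)"
        using a by (simp add: gs_def power2_eq_square exp_add[symmetric] field_simps)
      have "(cmod (poly Q (complex_of_real x) * gs a x))\<^sup>2 = (cmod (poly Q (complex_of_real x)))\<^sup>2 * exp (- (x\<^sup>2) / a)"
        by (simp add: norm_mult power_mult_distrib g2)
      also have "\<dots> \<le> (C * (1 + \<bar>x\<bar> ^ d))\<^sup>2 * exp (- (x\<^sup>2) / a)"
        using pb by (intro mult_right_mono power_mono) auto
      also have "\<dots> \<le> (2 * C\<^sup>2 * (1 + \<bar>x\<bar> ^ (2 * d))) * exp (- (x\<^sup>2) / a)"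
      proof (intro mult_right_mono)
        have "0 \<le> (1 - \<bar>x\<bar> ^ d)\<^sup>2" by simp
        then have "(1 + \<bar>x\<bar> ^ d)\<^sup>2 \<le> 2 * (1 + \<bar>x\<bar> ^ (2 * d))"
          by (simp add: power2_eq_square power_mult algebra_simps)
        then have h1: "C\<^sup>2 * (1 + \<bar>x\<bar> ^ d)\<^sup>2 \<le> C\<^sup>2 * (2 * (1 + \<bar>x\<bar> ^ (2 * d)))"
          by (intro mult_left_mono) auto
        have h2: "(C * (1 + \<bar>x\<bar> ^ d))\<^sup>2 = C\<^sup>2 * (1 + \<bar>x\<bar> ^ d)\<^sup>2" by (rule power_mult_distrib)
        have h3: "2 * C\<^sup>2 * (1 + \<bar>x\<bar> ^ (2 * d)) = C\<^sup>2 * (2 * (1 + \<bar>x\<bar> ^ (2 * d)))" by (simp only: ac_simps)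
        show "(C * (1 + \<bar>x\<bar> ^ d))\<^sup>2 \<le> 2 * C\<^sup>2 * (1 + \<bar>x\<bar> ^ (2 * d))"
          unfolding h2 h3 by (rule h1)
      qed auto
      also have "\<dots> = 2 * C\<^sup>2 * (\<bar>x\<bar> ^ 0 * exp (- (x\<^sup>2) / a)) + 2 * C\<^sup>2 * (\<bar>x\<bar> ^ (2 * d) * exp (- (x\<^sup>2) / a))"
        by (simp add: algebra_simps)
      finally show "norm ((cmod (poly Q (complex_of_real x) * gs a x))\<^sup>2) \<le>
        norm (2 * C\<^sup>2 * (\<bar>x\<bar> ^ 0 * exp (- (x\<^sup>2) / a)) + 2 * C\<^sup>2 * (\<bar>x\<bar> ^ (2 * d) * exp (- (x\<^sup>2) / a)))"
        by simp
    qed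
  qed
  then show ?thesis by (simp add: L2_def)
qed

lemma L2_Ef: "0 < a \<Longrightarrow> L2 (Ef s a P)"
proof -
  assume a: "0 < a"
  have e: "Ef s a P = (\<lambda>x. poly (Qs s P) (complex_of_real x) * gs a x)"
    by (simp add: fun_eq_iff Ef_Qs)
  have "(\<lambda>x. poly (Qs s P) (complex_of_real x) * gs a x) \<in> borel_measurable lborel"
    using Ef_meas[OF a, of s P] by (simp add: e)
  then show ?thesis unfolding e by (rule L2_polyg[OF a])
qed


lemma AE_zero_intervals:
  fixes d :: "real \<Rightarrow> complex"
  assumes L: "L2 d"
    and z: "\<And>a b. a < b \<Longrightarrow> 0 < a \<or> b < 0 \<Longrightarrow> (LINT x:{a<..<b}|lborel. d x) = 0"
  shows "AE x in lborel. d x = 0"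
proof -
  have si: "set_integrable lborel {c<..<R} d" for c R
    by (rule set_integrable_subset[OF L2_set_integrable[OF L, of c R]]) auto
  have pos: "AE x in lborel. 1 / real (Suc n) < x \<longrightarrow> x < real (Suc n) \<longrightarrow> d x = 0" for n
  proof (rule ae_zero_from_intervals[OF si])
    fix a b :: real assume h: "1 / real (Suc n) \<le> a" "a < b" "b \<le> real (Suc n)"
    have "0 < 1 / real (Suc n)" by simp
    then have "0 < a" using h(1) by linarith
    then show "(LINT x:{a<..<b}|lborel. d x) = 0" using h by (intro z) auto
  qed
  have neg: "AE x in lborel. - real (Suc n) < x \<longrightarrow> x < - (1 / real (Suc n)) \<longrightarrow> d x = 0" for n
  proof (rule ae_zero_from_intervals[OF si])
    fix a b :: real assume h: "- real (Suc n) \<le> a" "a < b" "b \<le> - (1 / real (Suc n))"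
    have "0 < 1 / real (Suc n)" by simp
    then have "b < 0" using h(3) by linarith
    then show "(LINT x:{a<..<b}|lborel. d x) = 0" using h by (intro z) auto
  qed
  have "AE x in lborel. (\<forall>n. 1 / real (Suc n) < x \<longrightarrow> x < real (Suc n) \<longrightarrow> d x = 0) \<and>
      (\<forall>n. - real (Suc n) < x \<longrightarrow> x < - (1 / real (Suc n)) \<longrightarrow> d x = 0) \<and> x \<noteq> 0"
    using pos neg AE_lborel_singleton[of 0] by (simp add: AE_all_countable)
  then show ?thesis
  proof eventually_elim
    case (elim x)
    then have x0: "\<bar>x\<bar> > 0" by simp
    obtain n where n: "\<bar>x\<bar> + 1 / \<bar>x\<bar> < real n" using reals_Archimedean2 by blast
    have p1: "0 < 1 / \<bar>x\<bar>" using x0 by simp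
    have p2: "real (Suc n) = real n + 1" by simp
    have i1: "\<bar>x\<bar> < real (Suc n)" using n p1 p2 by linarith
    have "1 / \<bar>x\<bar> < real (Suc n)" using n x0 by simp
    then have i2: "1 / real (Suc n) < \<bar>x\<bar>" using x0
      by (metis divide_less_eq mult.commute of_nat_0_less_iff zero_less_Suc)
    show ?case
    proof (cases "x > 0")
      case True then show ?thesis using elim i1 i2 by auto
    next
      case False
      then have "\<bar>x\<bar> = - x" by simp
      then have "- real (Suc n) < x" "x < - (1 / real (Suc n))" using i1 i2 by linarith+
      then show ?thesis using elim by blast
    qed
  qed
qed

lemma LINT_Ioo_LBINT:
  "a \<le> b \<Longrightarrow> (LINT x:{a<..<b}|lborel. d x) = (LBINT x=ereal a..ereal b. d x)"
  by (subst interval_integral_Ioo) auto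

lemma AE_zero_LBINT:
  fixes d :: "real \<Rightarrow> complex"
  assumes L: "L2 d" and z: "\<And>x. (LBINT y=ereal 0..ereal x. d y) = 0"
  shows "AE x in lborel. d x = 0"
proof (rule AE_zero_intervals[OF L])
  fix a b :: real assume "a < b"
  have "(LBINT y=ereal 0..ereal a. d y) + (LBINT y=ereal a..ereal b. d y) = (LBINT y=ereal 0..ereal b. d y)"
    by (rule L2_LBINT_sum[OF L])
  then have "(LBINT y=ereal a..ereal b. d y) = 0" using z[of a] z[of b] by simp
  then show "(LINT x:{a<..<b}|lborel. d x) = 0" using \<open>a < b\<close> by (simp add: LINT_Ioo_LBINT)
qed

lemma Ef_set_integrable: "0 < a \<Longrightarrow> set_integrable lborel {c..e} (Ef s a P)"
  by (rule L2_set_integrable[OF L2_Ef])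

lemma Ef_FTC:
  assumes a: "0 < a"
  shows "(LBINT y=ereal 0..ereal x. Ef 1 a (Dop a P) y) = Ef 0 a P x - Ef 0 a P 0"
  apply (rule FTC_LBINT[where S="{}"])
     apply simp
    apply (rule Ef_cont0[OF a])
   apply (rule Ef_deriv[OF a])
  apply (rule Ef_set_integrable[OF a])
  done

lemma Ef_Mop0: "x \<noteq> 0 \<Longrightarrow> - \<i> * Ef 1 a (Dop a P) x / complex_of_real x = Ef 0 a (Mop a P) x"
  by (simp add: Ef_def Mop_def)

lemma t_step_even:
  assumes a: "0 < a" and yv: "(y, v) \<in> t_graph" and ae: "AE x in lborel. y x = Ef 0 a P x"
  shows "AE x in lborel. v x = Ef 0 a (Mop a P) x"
proof -
  from yv obtain m where ym: "(y, m) \<in> p_graph" and mv: "(m, v) \<in> qinv_graph"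
    by (auto simp: t_graph_def)
  from ym have "\<exists>u w. L2 w \<and> (AE x in lborel. y x = u x) \<and>
        (\<forall>x. u x = u 0 + (LBINT t=0..x. w t)) \<and> (AE x in lborel. m x = - \<i> * w x)"
    unfolding p_graph_def by blast
  then obtain u w where Lw: "L2 w" and yu: "AE x in lborel. y x = u x"
    and uw: "\<And>x. u x = u 0 + (LBINT t=0..x. w t)" and mw: "AE x in lborel. m x = - \<i> * w x"
    by blast
  from mv have vm: "AE x in lborel. v x = m x / complex_of_real x" by (simp add: qinv_graph_def)
  have ueq: "AE x in lborel. u x = Ef 0 a P x" using yu ae by eventually_elim simp
  have uc: "continuous_on UNIV u"
  proof -
    have "continuous_on UNIV (\<lambda>x::real. u 0 + (LBINT t=0..ereal x. w t))"
      by (intro continuous_on_add continuous_on_const LBINT_cont[OF Lw])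
    moreover have "(\<lambda>x::real. u 0 + (LBINT t=0..ereal x. w t)) = u" by (rule ext) (rule uw[symmetric])
    ultimately show ?thesis by metis
  qed
  have uE: "u x = Ef 0 a P x" for x
    by (rule cont_ae_eq_imp_eq[OF uc Ef_cont0[OF a] ueq])
  define d where "d x = w x - Ef 1 a (Dop a P) x" for x
  have Ld: "L2 d" unfolding d_def by (intro L2_diff Lw L2_Ef a)
  have "AE x in lborel. d x = 0"
  proof (rule AE_zero_LBINT[OF Ld])
    fix x
    have "(LBINT t=ereal 0..ereal x. d t) = (LBINT t=ereal 0..ereal x. w t) - (LBINT t=ereal 0..ereal x. Ef 1 a (Dop a P) t)"
      unfolding d_def by (intro interval_lebesgue_integral_diff(2) L2_interval_integrable Lw L2_Ef a)
    also have "\<dots> = 0"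
    proof -
      have "(LBINT t=ereal 0..ereal x. w t) = u x - u 0" using uw[of x] by (simp add: zero_ereal_def)
      then show ?thesis using uE[of x] uE[of 0] Ef_FTC[OF a, of x P] by simp
    qed
    finally show "(LBINT t=ereal 0..ereal x. d t) = 0" .
  qed
  then show ?thesis using mw vm AE_lborel_singleton[of 0]
  proof eventually_elim
    case (elim x)
    then show ?case using Ef_Mop0[of x a P] by (simp add: d_def)
  qed
qed


definition tent :: "real \<Rightarrow> real \<Rightarrow> real \<Rightarrow> real \<Rightarrow> real" where
  "tent A B \<delta> x = max 0 (min 1 (min ((x - A) / \<delta>) ((B - x) / \<delta>)))"
definition twd :: "real \<Rightarrow> real \<Rightarrow> real \<Rightarrow> real \<Rightarrow> real" where
  "twd A B \<delta> x = (if A < x \<and> x < A + \<delta> then 1 / \<delta> else if B - \<delta> < x \<and> x < B then - 1 / \<delta> else 0)"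

definition tc :: "real \<Rightarrow> real \<Rightarrow> real \<Rightarrow> real \<Rightarrow> complex" where
  "tc A B \<delta> x = complex_of_real (tent A B \<delta> x)"
definition wc :: "real \<Rightarrow> real \<Rightarrow> real \<Rightarrow> real \<Rightarrow> complex" where
  "wc A B \<delta> x = complex_of_real (twd A B \<delta> x)"
definition kc :: "real \<Rightarrow> real \<Rightarrow> real \<Rightarrow> real \<Rightarrow> complex" where
  "kc A B \<delta> x = - \<i> * wc A B \<delta> x / complex_of_real x"

locale tentloc =
  fixes A B \<delta> :: real
  assumes dpos: "0 < \<delta>" and dle: "2 * \<delta> \<le> B - A"
begin

lemma tent_left: "x \<le> A \<Longrightarrow> tent A B \<delta> x = 0"
proof -
  assume "x \<le> A"
  then have "(x - A) / \<delta> \<le> 0" using dpos by (simp add: divide_nonpos_pos)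
  then show ?thesis by (simp add: tent_def)
qed

lemma tent_right: "B \<le> x \<Longrightarrow> tent A B \<delta> x = 0"
proof -
  assume "B \<le> x"
  then have "(B - x) / \<delta> \<le> 0" using dpos by (simp add: divide_nonpos_pos)
  then show ?thesis by (simp add: tent_def)
qed

lemma tent_01: "0 \<le> tent A B \<delta> x" "tent A B \<delta> x \<le> 1"
  by (auto simp: tent_def)

lemma tent_up: "A \<le> x \<Longrightarrow> x \<le> A + \<delta> \<Longrightarrow> tent A B \<delta> x = (x - A) / \<delta>"
proof -
  assume h: "A \<le> x" "x \<le> A + \<delta>"
  have "(x - A) / \<delta> \<le> 1" using h dpos by simp
  moreover have "(x - A) / \<delta> \<le> (B - x) / \<delta>" using h dle dpos by (intro divide_right_mono) auto
  moreover have "0 \<le> (x - A) / \<delta>" using h dpos by simp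
  ultimately show ?thesis by (simp add: tent_def)
qed

lemma tent_mid: "A + \<delta> \<le> x \<Longrightarrow> x \<le> B - \<delta> \<Longrightarrow> tent A B \<delta> x = 1"
proof -
  assume h: "A + \<delta> \<le> x" "x \<le> B - \<delta>"
  have "1 \<le> (x - A) / \<delta>" using h dpos by simp
  moreover have "1 \<le> (B - x) / \<delta>" using h dpos by simp
  ultimately show ?thesis by (simp add: tent_def)
qed

lemma tent_down: "B - \<delta> \<le> x \<Longrightarrow> x \<le> B \<Longrightarrow> tent A B \<delta> x = (B - x) / \<delta>"
proof -
  assume h: "B - \<delta> \<le> x" "x \<le> B"
  have "(B - x) / \<delta> \<le> 1" using h dpos by simp
  moreover have "(B - x) / \<delta> \<le> (x - A) / \<delta>" using h dle dpos by (intro divide_right_mono) auto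
  moreover have "0 \<le> (B - x) / \<delta>" using h dpos by simp
  ultimately show ?thesis by (simp add: tent_def)
qed

lemma twd_out: "x \<le> A \<or> B \<le> x \<Longrightarrow> twd A B \<delta> x = 0"
  using dpos dle by (auto simp: twd_def)

lemma tent_vd:
  assumes x: "x \<notin> {A, A + \<delta>, B - \<delta>, B}"
  shows "(tent A B \<delta> has_vector_derivative twd A B \<delta> x) (at x)"
proof -
  consider "x < A" | "A < x \<and> x < A + \<delta>" | "A + \<delta> < x \<and> x < B - \<delta>" | "B - \<delta> < x \<and> x < B" | "B < x"
    using x by fastforce
  then show ?thesis
  proof cases
    case 1
    have "((\<lambda>y. 0) has_vector_derivative 0) (at x)" by (rule has_vector_derivative_const)
    then have "(tent A B \<delta> has_vector_derivative 0) (at x)"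
      by (rule has_vector_derivative_transform_within_open[where S="{..<A}"])
         (use 1 dpos in \<open>auto simp: tent_left\<close>)
    then show ?thesis using 1 dpos dle by (simp add: twd_def)
  next
    case 2
    have "((\<lambda>y. (y - A) / \<delta>) has_real_derivative 1 / \<delta>) (at x)"
      using dpos by (auto intro!: derivative_eq_intros)
    then have "((\<lambda>y. (y - A) / \<delta>) has_vector_derivative 1 / \<delta>) (at x)"
      by (simp add: has_real_derivative_iff_has_vector_derivative)
    then have "(tent A B \<delta> has_vector_derivative 1 / \<delta>) (at x)"
      by (rule has_vector_derivative_transform_within_open[where S="{A<..<A + \<delta>}"])
         (use 2 in \<open>auto simp: tent_up\<close>)
    then show ?thesis using 2 by (simp add: twd_def)
  next
    case 3
    have "((\<lambda>y. 1) has_vector_derivative 0) (at x)" by (rule has_vector_derivative_const)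
    then have "(tent A B \<delta> has_vector_derivative 0) (at x)"
      by (rule has_vector_derivative_transform_within_open[where S="{A + \<delta><..<B - \<delta>}"])
         (use 3 in \<open>auto simp: tent_mid\<close>)
    then show ?thesis using 3 by (simp add: twd_def)
  next
    case 4
    have "((\<lambda>y. (B - y) / \<delta>) has_real_derivative - 1 / \<delta>) (at x)"
      using dpos by (auto intro!: derivative_eq_intros)
    then have "((\<lambda>y. (B - y) / \<delta>) has_vector_derivative - 1 / \<delta>) (at x)"
      by (simp add: has_real_derivative_iff_has_vector_derivative)
    then have "(tent A B \<delta> has_vector_derivative - 1 / \<delta>) (at x)"
      by (rule has_vector_derivative_transform_within_open[where S="{B - \<delta><..<B}"])
         (use 4 in \<open>auto simp: tent_down\<close>)
    moreover have "\<not> (A < x \<and> x < A + \<delta>)" using 4 dle by auto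
    then have "twd A B \<delta> x = - 1 / \<delta>" using 4 by (simp add: twd_def)
    ultimately show ?thesis by simp
  next
    case 5
    have "((\<lambda>y. 0) has_vector_derivative 0) (at x)" by (rule has_vector_derivative_const)
    then have "(tent A B \<delta> has_vector_derivative 0) (at x)"
      by (rule has_vector_derivative_transform_within_open[where S="{B<..}"])
         (use 5 dpos dle in \<open>auto simp: tent_right\<close>)
    then show ?thesis using 5 dpos dle by (simp add: twd_def)
  qed
qed

lemma tc_vd:
  assumes x: "x \<notin> {A, A + \<delta>, B - \<delta>, B}"
  shows "(tc A B \<delta> has_vector_derivative wc A B \<delta> x) (at x)"
  unfolding tc_def wc_def
  by (rule bounded_linear.has_vector_derivative[OF bounded_linear_of_real tent_vd[OF x]])

lemma tc_cont: "continuous_on UNIV (tc A B \<delta>)"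
  unfolding tc_def tent_def using dpos by (auto intro!: continuous_intros)

lemma tc_meas [measurable]: "tc A B \<delta> \<in> borel_measurable borel"
  by (rule borel_measurable_continuous_onI[OF tc_cont])

lemma twd_meas [measurable]: "twd A B \<delta> \<in> borel_measurable borel"
  unfolding twd_def by measurable

lemma wc_meas [measurable]: "wc A B \<delta> \<in> borel_measurable borel"
  unfolding wc_def by measurable

lemma tc_bound: "cmod (tc A B \<delta> x) \<le> indicator {A..B} x"
  using tent_01[of x] tent_left[of x] tent_right[of x] by (auto simp: tc_def indicator_def)

lemma twd_bound: "\<bar>twd A B \<delta> x\<bar> \<le> (1 / \<delta>) * indicator {A..B} x"
  using dpos dle by (auto simp: twd_def indicator_def)

lemma L2_ind: "L2 (\<lambda>x. complex_of_real (indicator {A..B} x))"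
proof -
  have "integrable lborel (\<lambda>x. (cmod (complex_of_real (indicator {A..B} x)))\<^sup>2)"
  proof -
    have "(\<lambda>x. (cmod (complex_of_real (indicator {A..B} x)))\<^sup>2) = indicator {A..B}"
      by (auto simp: indicator_def fun_eq_iff)
    then show ?thesis by (simp add: integrable_real_indicator emeasure_lborel_Icc_eq)
  qed
  then show ?thesis by (simp add: L2_def)
qed

lemma L2_tc: "L2 (tc A B \<delta>)"
  by (rule L2_bound[OF L2_ind, where C=1]) (auto simp: tc_bound)

lemma L2_wc: "L2 (wc A B \<delta>)"
proof (rule L2_bound[OF L2_ind, where C="1 / \<delta>"])
  show "wc A B \<delta> \<in> borel_measurable lborel" by measurable
  show "AE x in lborel. cmod (wc A B \<delta> x) \<le> 1 / \<delta> * cmod (complex_of_real (indicator {A..B} x))"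
  proof (intro AE_I2)
    fix x show "cmod (wc A B \<delta> x) \<le> 1 / \<delta> * cmod (complex_of_real (indicator {A..B} x))"
      using twd_bound[of x] by (auto simp: wc_def indicator_def split: if_splits)
  qed
qed

lemma L2_kc:
  assumes side: "0 < A \<or> B < 0"
  shows "L2 (kc A B \<delta>)"
proof -
  define \<mu> where "\<mu> = min \<bar>A\<bar> \<bar>B\<bar>"
  have mu: "0 < \<mu>" using side dle dpos by (auto simp: \<mu>_def)
  have "cmod (kc A B \<delta> x) \<le> (1 / (\<delta> * \<mu>)) * cmod (complex_of_real (indicator {A..B} x))" for x
  proof (cases "A < x \<and> x < B")
    case True
    then have xm: "\<mu> \<le> \<bar>x\<bar>" using side by (auto simp: \<mu>_def)
    have "cmod (kc A B \<delta> x) = \<bar>twd A B \<delta> x\<bar> / \<bar>x\<bar>"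
      by (simp add: kc_def wc_def norm_divide norm_mult)
    also have "\<dots> \<le> (1 / \<delta>) / \<mu>"
      using twd_bound[of x] True mu xm dpos by (intro frac_le) (auto simp: indicator_def)
    finally show ?thesis using True by (simp add: indicator_def)
  next
    case False
    then have "twd A B \<delta> x = 0" by (intro twd_out) auto
    moreover have "0 \<le> (1 / (\<delta> * \<mu>)) * cmod (complex_of_real (indicator {A..B} x))"
      using dpos mu by simp
    ultimately show ?thesis by (simp add: kc_def wc_def)
  qed
  moreover have "kc A B \<delta> \<in> borel_measurable lborel"
    unfolding kc_def by measurable
  ultimately show ?thesis by (intro L2_bound[OF L2_ind, where C="1 / (\<delta> * \<mu>)"]) auto
qed

lemma tc_FTC: "(LBINT y=ereal c..ereal e. wc A B \<delta> y) = tc A B \<delta> e - tc A B \<delta> c"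
  by (rule FTC_LBINT[where S="{A, A + \<delta>, B - \<delta>, B}"])
     (auto intro: tc_cont tc_vd L2_set_integrable[OF L2_wc])

lemma tc_in_t:
  assumes side: "0 < A \<or> B < 0"
  shows "(tc A B \<delta>, kc A B \<delta>) \<in> t_graph"
proof -
  define m where "m x = - \<i> * wc A B \<delta> x" for x
  have Lm: "L2 m" unfolding m_def by (intro L2_scale L2_wc)
  have ftc: "\<forall>x. tc A B \<delta> x = tc A B \<delta> 0 + (LBINT y=0..ereal x. wc A B \<delta> y)"
  proof
    fix x
    show "tc A B \<delta> x = tc A B \<delta> 0 + (LBINT y=0..ereal x. wc A B \<delta> y)"
      using tc_FTC[of 0 x] by (simp add: zero_ereal_def)
  qed
  have ae1: "AE x in lborel. tc A B \<delta> x = tc A B \<delta> x" by simp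
  have ae2: "AE x in lborel. m x = - \<i> * wc A B \<delta> x" by (simp add: m_def)
  have "(tc A B \<delta>, m) \<in> p_graph"
    unfolding p_graph_def using L2_tc Lm L2_wc ftc ae1 ae2 by blast
  moreover have "(m, kc A B \<delta>) \<in> qinv_graph"
    unfolding qinv_graph_def using Lm L2_kc[OF side] by (auto simp: m_def kc_def)
  ultimately show ?thesis unfolding t_graph_def by blast
qed

end


lemma cnj_cont: "continuous_on UNIV f \<Longrightarrow> continuous_on UNIV (\<lambda>x. cnj (f x :: complex))"
  by (intro continuous_intros)

lemma (in tentloc) pair_odd:
  assumes a: "0 < a" and side: "0 < A \<or> B < 0"
  shows "L2_inner (Ef 1 a P) (kc A B \<delta>) = L2_inner (Ef 1 a (Mop a P)) (tc A B \<delta>)"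
proof -
  define G where "G = Ef 0 a P"
  define G' where "G' = Ef 1 a (Dop a P)"
  have wc0: "wc A B \<delta> 0 = 0" using side twd_out[of 0] by (auto simp: wc_def)
  have h1: "cnj (Ef 1 a P x) * kc A B \<delta> x = - \<i> * (cnj (G x) * wc A B \<delta> x)" for x
  proof (cases "x = 0")
    case True then show ?thesis using wc0 by (simp add: kc_def)
  next
    case False
    have "cnj (Ef 1 a P x) = complex_of_real x * cnj (G x)"
      by (simp only: Ef1_eq G_def) simp
    then show ?thesis using False by (simp add: kc_def field_simps)
  qed
  have h2: "cnj (Ef 1 a (Mop a P) x) * tc A B \<delta> x = \<i> * (cnj (G' x) * tc A B \<delta> x)" for x
  proof -
    have "Ef 1 a (Mop a P) x = - \<i> * G' x" by (simp add: Ef_def Mop_def G'_def)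
    then show ?thesis by simp
  qed
  have i1: "integrable lborel (\<lambda>x. cnj (G x) * wc A B \<delta> x)"
    unfolding G_def by (intro L2_inner_integrable L2_Ef a L2_wc)
  have i2: "integrable lborel (\<lambda>x. cnj (G' x) * tc A B \<delta> x)"
    unfolding G'_def by (intro L2_inner_integrable L2_Ef a L2_tc)
  define F' where "F' x = cnj (G x) * wc A B \<delta> x + cnj (G' x) * tc A B \<delta> x" for x
  have iF: "integrable lborel F'" unfolding F'_def by (intro Bochner_Integration.integrable_add i1 i2)
  have sum0: "integral\<^sup>L lborel F' = 0"
  proof -
    define F where "F x = cnj (G x) * tc A B \<delta> x" for x
    have Fc: "continuous_on UNIV F"
      unfolding F_def G_def by (intro continuous_on_mult cnj_cont Ef_cont0[OF a] tc_cont)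
    have Fd: "(F has_vector_derivative F' x) (at x)" if "x \<notin> {A, A + \<delta>, B - \<delta>, B}" for x
    proof -
      have "((\<lambda>x. cnj (G x)) has_vector_derivative cnj (G' x)) (at x)"
        unfolding G_def G'_def by (rule bounded_linear.has_vector_derivative[OF bounded_linear_cnj Ef_deriv[OF a]])
      from has_vector_derivative_mult[OF this tc_vd[OF that]]
      show ?thesis unfolding F_def F'_def by (simp add: add.commute)
    qed
    have "(LBINT y=ereal A..ereal B. F' y) = F B - F A"
      by (rule FTC_LBINT[where S="{A, A + \<delta>, B - \<delta>, B}"])
         (auto intro: Fc Fd iF integrable_mult_indicator simp: set_integrable_def)
    also have "\<dots> = 0" using tent_left[of A] tent_right[of B] by (simp add: F_def tc_def)
    finally have L: "(LBINT y=ereal A..ereal B. F' y) = 0" .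
    have "integral\<^sup>L lborel F' = (LINT x:{A<..<B}|lborel. F' x)"
      unfolding set_lebesgue_integral_def
    proof (intro Bochner_Integration.integral_cong refl)
      fix x
      show "F' x = indicator {A<..<B} x *\<^sub>R F' x"
      proof (cases "A < x \<and> x < B")
        case False
        then have "tent A B \<delta> x = 0" "twd A B \<delta> x = 0"
          using tent_left[of x] tent_right[of x] twd_out[of x] by auto
        then show ?thesis by (simp add: F'_def tc_def wc_def)
      qed (simp add: indicator_def)
    qed
    also have "\<dots> = 0" using L dpos dle by (simp add: LINT_Ioo_LBINT)
    finally show ?thesis .
  qed
  have I: "integral\<^sup>L lborel (\<lambda>x. cnj (G x) * wc A B \<delta> x) = - integral\<^sup>L lborel (\<lambda>x. cnj (G' x) * tc A B \<delta> x)"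
    using sum0 unfolding F'_def by (simp add: Bochner_Integration.integral_add[OF i1 i2] eq_neg_iff_add_eq_0)
  have "L2_inner (Ef 1 a P) (kc A B \<delta>) = - \<i> * integral\<^sup>L lborel (\<lambda>x. cnj (G x) * wc A B \<delta> x)"
    unfolding L2_inner_def h1 by simp
  also have "\<dots> = \<i> * integral\<^sup>L lborel (\<lambda>x. cnj (G' x) * tc A B \<delta> x)" using I by simp
  also have "\<dots> = L2_inner (Ef 1 a (Mop a P)) (tc A B \<delta>)"
    unfolding L2_inner_def h2 by simp
  finally show ?thesis .
qed

lemma tentloc_seq:
  assumes AB: "A < B"
  shows "tentloc A B ((B - A) / (2 * real (Suc n)))"
proof
  show "0 < (B - A) / (2 * real (Suc n))" using AB by simp
  have "0 \<le> (B - A) * real n" using AB by simp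
  then have "B - A \<le> (B - A) * real (Suc n)" by (simp add: algebra_simps)
  then have ineq: "(B - A) / real (Suc n) \<le> B - A" by (subst pos_divide_le_eq) auto
  have e: "2 * ((B - A) / (2 * real (Suc n))) = (B - A) / real (Suc n)"
    by (simp add: divide_simps del: of_nat_Suc)
  show "2 * ((B - A) / (2 * real (Suc n))) \<le> B - A" unfolding e by (rule ineq)
qed

lemma tent_lim:
  assumes AB: "A < B"
  shows "(\<lambda>n. tc A B ((B - A) / (2 * real (Suc n))) x) \<longlonglongrightarrow> complex_of_real (indicator {A<..<B} x)"
proof (cases "A < x \<and> x < B")
  case True
  define m where "m = min (x - A) (B - x)"
  have m: "0 < m" using True by (simp add: m_def)
  obtain N where N: "(B - A) / m < real N" using reals_Archimedean2 by blast
  have "eventually (\<lambda>n. tc A B ((B - A) / (2 * real (Suc n))) x = 1) sequentially"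
    unfolding eventually_sequentially
  proof (intro exI allI impI)
    fix n assume "N \<le> n"
    define \<delta> where "\<delta> = (B - A) / (2 * real (Suc n))"
    have dpos: "0 < \<delta>" using AB by (simp add: \<delta>_def)
    have "(B - A) / m < real (Suc n)" using N \<open>N \<le> n\<close> by (smt (verit) of_nat_Suc of_nat_mono)
    then have "B - A < m * real (Suc n)" using m by (simp add: divide_less_eq mult.commute)
    moreover have "m * real (Suc n) \<le> m * (2 * real (Suc n))" using m by simp
    ultimately have "B - A \<le> m * (2 * real (Suc n))" by linarith
    then have "\<delta> \<le> m" unfolding \<delta>_def by (subst pos_divide_le_eq) auto
    then have "1 \<le> (x - A) / \<delta>" "1 \<le> (B - x) / \<delta>" using dpos by (auto simp: m_def)
    then show "tc A B \<delta> x = 1" by (simp add: tc_def tent_def)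
  qed
  then have "(\<lambda>n. tc A B ((B - A) / (2 * real (Suc n))) x) \<longlonglongrightarrow> 1" by (rule tendsto_eventually)
  then show ?thesis using True by (simp add: indicator_def)
next
  case False
  have z0: "tc A B ((B - A) / (2 * real (Suc n))) x = 0" for n
  proof -
    interpret tentloc A B "(B - A) / (2 * real (Suc n))"
      by (rule tentloc_seq[OF AB])
    show ?thesis using False tent_left[of x] tent_right[of x] by (auto simp: tc_def)
  qed
  have "(\<lambda>n. tc A B ((B - A) / (2 * real (Suc n))) x) = (\<lambda>n. 0)" by (rule ext) (rule z0)
  moreover have "complex_of_real (indicator {A<..<B} x) = 0" using False by (simp add: indicator_def)
  ultimately show ?thesis by (metis tendsto_const)
qed

lemma t_step_odd:
  assumes a: "0 < a" and yv: "(y, v) \<in> t_adj_graph" and ae: "AE x in lborel. y x = Ef 1 a P x"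
  shows "AE x in lborel. v x = Ef 1 a (Mop a P) x"
proof -
  have Ly: "L2 y" and Lv: "L2 v" and adj: "\<And>f k. (f, k) \<in> t_graph \<Longrightarrow> L2_inner y k = L2_inner v f"
    using yv by (auto simp: t_adj_graph_def)
  define E2 where "E2 = Ef 1 a (Mop a P)"
  define d where "d x = v x - E2 x" for x
  have LE2: "L2 E2" unfolding E2_def by (rule L2_Ef[OF a])
  have Ld: "L2 d" unfolding d_def by (intro L2_diff Lv LE2)
  have [measurable]: "d \<in> borel_measurable lborel" using Ld by (simp add: L2_def)
  define cd where "cd x = cnj (d x)" for x
  have Lcd: "L2 cd"
  proof (rule L2_bound[OF Ld, where C=1])
    show "cd \<in> borel_measurable lborel" unfolding cd_def by measurable
  qed (simp add: cd_def)
  have "AE x in lborel. cd x = 0"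
  proof (rule AE_zero_intervals[OF Lcd])
    fix A B :: real assume AB: "A < B" and side: "0 < A \<or> B < 0"
    define \<delta> where "\<delta> n = (B - A) / (2 * real (Suc n))" for n
    have zero: "L2_inner d (tc A B (\<delta> n)) = 0" for n
    proof -
      interpret tentloc A B "\<delta> n"
        unfolding \<delta>_def by (rule tentloc_seq[OF AB])
      have "L2_inner v (tc A B (\<delta> n)) = L2_inner y (kc A B (\<delta> n))"
        using adj[OF tc_in_t[OF side]] by simp
      also have "\<dots> = L2_inner (Ef 1 a P) (kc A B (\<delta> n))"
        unfolding L2_inner_def
      proof (rule integral_cong_AE)
        have [measurable]: "y \<in> borel_measurable lborel" using Ly by (simp add: L2_def)
        have [measurable]: "Ef 1 a P \<in> borel_measurable lborel" using L2_Ef[OF a] by (simp add: L2_def)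
        have [measurable]: "kc A B (\<delta> n) \<in> borel_measurable lborel" using L2_kc[OF side] by (simp add: L2_def)
        show "(\<lambda>x. cnj (y x) * kc A B (\<delta> n) x) \<in> borel_measurable lborel" by measurable
        show "(\<lambda>x. cnj (Ef 1 a P x) * kc A B (\<delta> n) x) \<in> borel_measurable lborel" by measurable
        show "AE x in lborel. cnj (y x) * kc A B (\<delta> n) x = cnj (Ef 1 a P x) * kc A B (\<delta> n) x"
          using ae by eventually_elim simp
      qed
      also have "\<dots> = L2_inner E2 (tc A B (\<delta> n))"
        unfolding E2_def by (rule pair_odd[OF a side])
      finally have eq: "L2_inner v (tc A B (\<delta> n)) = L2_inner E2 (tc A B (\<delta> n))" .
      have "L2_inner d (tc A B (\<delta> n)) = L2_inner v (tc A B (\<delta> n)) - L2_inner E2 (tc A B (\<delta> n))"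
        unfolding L2_inner_def d_def
        by (simp add: left_diff_distrib Bochner_Integration.integral_diff[OF L2_inner_integrable[OF Lv L2_tc] L2_inner_integrable[OF LE2 L2_tc]])
      then show ?thesis using eq by simp
    qed
    have lim: "(\<lambda>n. L2_inner d (tc A B (\<delta> n))) \<longlonglongrightarrow> (LINT x:{A<..<B}|lborel. cd x)"
      unfolding L2_inner_def set_lebesgue_integral_def
    proof (rule integral_dominated_convergence[where w="\<lambda>x. indicator {A..B} x * cmod (d x)"])
      show "(\<lambda>x. indicator {A<..<B} x *\<^sub>R cd x) \<in> borel_measurable lborel" unfolding cd_def by measurable
      show "(\<lambda>x. cnj (d x) * tc A B (\<delta> n) x) \<in> borel_measurable lborel" for n
      proof -
        interpret tentloc A B "\<delta> n"
          unfolding \<delta>_def by (rule tentloc_seq[OF AB])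
        show ?thesis by measurable
      qed
      have "integrable lborel (\<lambda>x. indicator {A..B} x *\<^sub>R d x)"
        using L2_set_integrable[OF Ld, of A B] by (simp add: set_integrable_def)
      then have inn: "integrable lborel (\<lambda>x. norm (indicator {A..B} x *\<^sub>R d x))"
        by (rule integrable_norm)
      have eqn: "(\<lambda>x. norm (indicator {A..B} x *\<^sub>R d x)) = (\<lambda>x. indicator {A..B} x * cmod (d x))"
        by (auto simp: indicator_def fun_eq_iff)
      show "integrable lborel (\<lambda>x. indicator {A..B} x * cmod (d x))"
        using inn unfolding eqn .
      show "AE x in lborel. (\<lambda>n. cnj (d x) * tc A B (\<delta> n) x) \<longlonglongrightarrow> indicator {A<..<B} x *\<^sub>R cd x"
      proof (intro AE_I2)
        fix x
        have "(\<lambda>n. cnj (d x) * tc A B (\<delta> n) x) \<longlonglongrightarrow> cnj (d x) * complex_of_real (indicator {A<..<B} x)"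
          unfolding \<delta>_def by (intro tendsto_mult_left tent_lim AB)
        then show "(\<lambda>n. cnj (d x) * tc A B (\<delta> n) x) \<longlonglongrightarrow> indicator {A<..<B} x *\<^sub>R cd x"
          by (simp add: cd_def scaleR_conv_of_real mult.commute)
      qed
      show "AE x in lborel. norm (cnj (d x) * tc A B (\<delta> n) x) \<le> indicator {A..B} x * cmod (d x)" for n
      proof (intro AE_I2)
        fix x
        interpret tentloc A B "\<delta> n"
          unfolding \<delta>_def by (rule tentloc_seq[OF AB])
        have "norm (cnj (d x) * tc A B (\<delta> n) x) = cmod (d x) * cmod (tc A B (\<delta> n) x)" by (simp add: norm_mult)
        also have "\<dots> \<le> cmod (d x) * indicator {A..B} x" by (intro mult_left_mono tc_bound) auto
        finally show "norm (cnj (d x) * tc A B (\<delta> n) x) \<le> indicator {A..B} x * cmod (d x)" by (simp add: mult.commute)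
      qed
    qed
    moreover have "(\<lambda>n. L2_inner d (tc A B (\<delta> n))) \<longlonglongrightarrow> 0" using zero by simp
    ultimately show "(LINT x:{A<..<B}|lborel. cd x) = 0" by (rule LIMSEQ_unique)
  qed
  then show ?thesis by eventually_elim (simp add: cd_def d_def E2_def)
qed


lemma chain:
  assumes step: "\<And>y v Q. (y, v) \<in> T \<Longrightarrow> AE x in lborel. y x = Ef s a Q x \<Longrightarrow> AE x in lborel. v x = Ef s a (Mop a Q) x"
  shows "(f, v) \<in> T ^^ k \<Longrightarrow> AE x in lborel. f x = Ef s a P x \<Longrightarrow> AE x in lborel. v x = Ef s a ((Mop a ^^ k) P) x"
proof (induction k arbitrary: v)
  case 0
  then show ?case by simp
next
  case (Suc k)
  from Suc.prems(1) obtain y where fy: "(f, y) \<in> T ^^ k" and yv: "(y, v) \<in> T" by auto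
  have "AE x in lborel. y x = Ef s a ((Mop a ^^ k) P) x" by (rule Suc.IH[OF fy Suc.prems(2)])
  from step[OF yv this] show ?case by simp
qed

lemma relpow_last:
  fixes T :: "('a \<times> 'a) set"
  shows "(f, v) \<in> T ^^ Suc k \<Longrightarrow> \<exists>y. (y, v) \<in> T"
proof -
  assume "(f, v) \<in> T ^^ Suc k"
  then obtain y where "(f, y) \<in> T ^^ k" and "(y, v) \<in> T" by auto
  then show ?thesis by blast
qed

lemma Mop_coeff:
  assumes "\<forall>j>m. coeff Q j = 0"
  shows "\<forall>j>m. coeff (Mop a Q) j = 0" "coeff (Mop a Q) m = (\<i> / complex_of_real a) * coeff Q m"
  using assms by (auto simp: Mop_def Dop_def coeff_pderiv field_simps)

lemma Mop_pow_coeff: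
  assumes "\<forall>j>m. coeff P j = 0"
  shows "(\<forall>j>m. coeff ((Mop a ^^ k) P) j = 0) \<and> coeff ((Mop a ^^ k) P) m = (\<i> / complex_of_real a) ^ k * coeff P m"
proof (induction k)
  case 0 then show ?case using assms by simp
next
  case (Suc k)
  then show ?case using Mop_coeff[of m "(Mop a ^^ k) P" a] by simp
qed

lemma Ef_lin: "Ef s a (\<Sum>n\<in>I. smult (c n) (Q n)) x = (\<Sum>n\<in>I. c n * Ef s a (Q n) x)"
  by (simp add: Ef_def poly_sum sum_distrib_left sum_distrib_right algebra_simps)

primrec qd :: "real \<Rightarrow> nat \<Rightarrow> (real \<Rightarrow> complex) \<Rightarrow> real \<Rightarrow> complex" where
  "qd q 0 F = F"
| "qd q (Suc k) F = (\<lambda>y. qd q k F (q * y) - complex_of_real (q ^ Suc k) * qd q k F y)"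

definition pk :: "real \<Rightarrow> nat \<Rightarrow> nat \<Rightarrow> real" where
  "pk q k j = (\<Prod>i\<in>{1..k}. q ^ (j + 1) - q ^ i)"

lemma pk_Suc: "pk q (Suc k) j = pk q k j * (q ^ (j + 1) - q ^ Suc k)"
  by (simp add: pk_def)

lemma qd_poly:
  "qd q k (\<lambda>y. \<Sum>j\<le>m. z j * complex_of_real (y ^ (j + 1))) y = (\<Sum>j\<le>m. z j * complex_of_real (pk q k j * y ^ (j + 1)))"
proof (induction k arbitrary: y)
  case 0 then show ?case by (simp add: pk_def)
next
  case (Suc k)
  have "qd q (Suc k) (\<lambda>y. \<Sum>j\<le>m. z j * complex_of_real (y ^ (j + 1))) y =
      (\<Sum>j\<le>m. z j * complex_of_real (pk q k j * (q * y) ^ (j + 1))) - complex_of_real (q ^ Suc k) * (\<Sum>j\<le>m. z j * complex_of_real (pk q k j * y ^ (j + 1)))"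
    by (simp only: qd.simps Suc.IH)
  also have "\<dots> = (\<Sum>j\<le>m. z j * complex_of_real (pk q k j * (q * y) ^ (j + 1)) - complex_of_real (q ^ Suc k) * (z j * complex_of_real (pk q k j * y ^ (j + 1))))"
    by (simp add: sum_distrib_left sum_subtractf)
  also have "\<dots> = (\<Sum>j\<le>m. z j * complex_of_real (pk q (Suc k) j * y ^ (j + 1)))"
  proof (intro sum.cong refl)
    fix j
    have r: "pk q k j * (q * y) ^ (j + 1) - q ^ Suc k * (pk q k j * y ^ (j + 1)) = pk q (Suc k) j * y ^ (j + 1)"
      by (simp add: pk_Suc power_mult_distrib algebra_simps)
    have "z j * complex_of_real (pk q k j * (q * y) ^ (j + 1)) - complex_of_real (q ^ Suc k) * (z j * complex_of_real (pk q k j * y ^ (j + 1)))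
        = z j * complex_of_real (pk q k j * (q * y) ^ (j + 1) - q ^ Suc k * (pk q k j * y ^ (j + 1)))"
      by (simp only: of_real_diff of_real_mult) (simp add: algebra_simps)
    then show "z j * complex_of_real (pk q k j * (q * y) ^ (j + 1)) - complex_of_real (q ^ Suc k) * (z j * complex_of_real (pk q k j * y ^ (j + 1)))
        = z j * complex_of_real (pk q (Suc k) j * y ^ (j + 1))" by (simp only: r)
  qed
  finally show ?case .
qed

lemma qd_conv:
  assumes q: "0 < q" "q < 1" and conv: "\<And>y. 0 < y \<Longrightarrow> y < Y \<Longrightarrow> convergent (\<lambda>N. F N y)"
  shows "0 < y \<Longrightarrow> y < Y \<Longrightarrow> convergent (\<lambda>N. qd q k (F N) y)"
proof (induction k arbitrary: y)
  case 0 then show ?case using conv by simp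
next
  case (Suc k)
  have "0 < q * y" "q * y < Y" using Suc.prems q by (auto simp: mult_less_cancel_right1 intro: less_trans[of _ y])
  then have c1: "convergent (\<lambda>N. qd q k (F N) (q * y))" by (rule Suc.IH)
  have c2: "convergent (\<lambda>N. qd q k (F N) y)" by (rule Suc.IH[OF Suc.prems])
  from c1 obtain L1 where L1: "(\<lambda>N. qd q k (F N) (q * y)) \<longlonglongrightarrow> L1" by (auto simp: convergent_def)
  from c2 obtain L2 where L2: "(\<lambda>N. qd q k (F N) y) \<longlonglongrightarrow> L2" by (auto simp: convergent_def)
  have "(\<lambda>N. qd q k (F N) (q * y) - complex_of_real (q ^ Suc k) * qd q k (F N) y) \<longlonglongrightarrow> L1 - complex_of_real (q ^ Suc k) * L2"
    by (intro tendsto_diff tendsto_mult_left L1 L2)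
  then show ?case by (auto simp: convergent_def)
qed

lemma pk_zero: "j < m \<Longrightarrow> pk q m j = 0"
  unfolding pk_def by (rule prod_zero) (auto intro!: bexI[of _ "j + 1"])

lemma pk_nonzero: "0 < q \<Longrightarrow> q < 1 \<Longrightarrow> pk q m m \<noteq> 0"
proof -
  assume q: "0 < q" "q < 1"
  have "q ^ (m + 1) - q ^ i \<noteq> 0" if "i \<in> {1..m}" for i
  proof -
    have "q ^ (m + 1) < q ^ i" using that q by (intro power_strict_decreasing) auto
    then show ?thesis by simp
  qed
  then show ?thesis unfolding pk_def by (simp add: prod_zero_iff)
qed

lemma qd_top:
  assumes q: "0 < q" "q < 1"
  shows "qd q m (\<lambda>y. \<Sum>j\<le>m. z j * complex_of_real (y ^ (j + 1))) y = z m * complex_of_real (pk q m m * y ^ (m + 1))"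
proof -
  have "qd q m (\<lambda>y. \<Sum>j\<le>m. z j * complex_of_real (y ^ (j + 1))) y = (\<Sum>j\<le>m. z j * complex_of_real (pk q m j * y ^ (j + 1)))"
    by (rule qd_poly)
  also have "\<dots> = (\<Sum>j<m. z j * complex_of_real (pk q m j * y ^ (j + 1))) + z m * complex_of_real (pk q m m * y ^ (m + 1))"
    by (simp add: lessThan_Suc_atMost[symmetric])
  also have "(\<Sum>j<m. z j * complex_of_real (pk q m j * y ^ (j + 1))) = 0"
    by (intro sum.neutral) (auto simp: pk_zero)
  finally show ?thesis by simp
qed

lemma coef_id:
  assumes "0 < e"
  shows "complex_of_real ((-1) ^ n / real (2 * n + 1) * sqrt e ^ (2 * n + 1)) * (\<i> / complex_of_real (sqrt e)) ^ (2 * n + 1)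
    = \<i> * complex_of_real (1 / real (2 * n + 1))"
proof -
  define a where "a = sqrt e"
  have a: "0 < a" using assms by (simp add: a_def)
  have ip: "\<i> ^ (2 * n + 1) = (-1) ^ n * \<i>" by (simp add: power_mult power_add)
  have "(\<i> / complex_of_real a) ^ (2 * n + 1) = \<i> ^ (2 * n + 1) / complex_of_real a ^ (2 * n + 1)"
    by (simp add: power_divide)
  also have "\<dots> = (-1) ^ n * \<i> / complex_of_real a ^ (2 * n + 1)" by (simp add: ip)
  finally have e1: "(\<i> / complex_of_real a) ^ (2 * n + 1) = (-1) ^ n * \<i> / complex_of_real a ^ (2 * n + 1)" .
  have nz: "complex_of_real a ^ (2 * n + 1) \<noteq> 0" using a by simp
  have m1: "((-1::complex) ^ n) * (-1) ^ n = 1" by (simp add: power_add[symmetric])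
  show ?thesis
    unfolding a_def[symmetric] e1 using nz m1
    by (simp add: field_simps)
qed

lemma not_summable_odd: "\<not> summable (\<lambda>n. 1 / real (2 * n + 1))"
proof
  assume s: "summable (\<lambda>n. 1 / real (2 * n + 1))"
  have "summable (\<lambda>n. 1 / (2 * real (Suc n)))"
  proof (rule summable_comparison_test[OF _ s])
    show "\<exists>N. \<forall>n\<ge>N. norm (1 / (2 * real (Suc n))) \<le> 1 / real (2 * n + 1)"
      by (intro exI[of _ 0] allI impI) (auto simp: divide_simps)
  qed
  then have "summable (\<lambda>n. 2 * (1 / (2 * real (Suc n))))" by (rule summable_mult)
  moreover have "(\<lambda>n. 2 * (1 / (2 * real (Suc n)))) = (\<lambda>n. inverse (real (Suc n)))"
    by (rule ext) (simp add: field_simps del: of_nat_Suc)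
  ultimately have "summable (\<lambda>n. inverse (real (Suc n)))" by simp
  then have "summable (\<lambda>n. inverse (real n))" by (subst summable_Suc_iff[symmetric])
  then show False using not_summable_harmonic[where 'a=real] by simp
qed


lemma gauss_moment_odd:
  assumes "0 < c"
  shows "has_bochner_integral lborel (\<lambda>x::real. \<bar>x\<bar> ^ (2 * k + 1) * exp (- (x\<^sup>2) / c)) (fact k * c ^ (k + 1))"
proof -
  define \<sigma> where "\<sigma> = sqrt (c / 2)"
  have sp: "0 < \<sigma>" using assms by (simp add: \<sigma>_def)
  have s2: "c = 2 * \<sigma>\<^sup>2" using assms by (simp add: \<sigma>_def)
  have nz: "sqrt (2 * pi * \<sigma>\<^sup>2) \<noteq> 0" using sp by simp
  have "has_bochner_integral lborel (\<lambda>x. normal_density 0 \<sigma> x * \<bar>x - 0\<bar> ^ (2 * k + 1)) (2^k * \<sigma>^(2 * k + 1) * fact k * sqrt (2 / pi))"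
    by (rule normal_moment_abs_odd[OF sp])
  then have "has_bochner_integral lborel (\<lambda>x. sqrt (2 * pi * \<sigma>\<^sup>2) * (normal_density 0 \<sigma> x * \<bar>x - 0\<bar> ^ (2 * k + 1)))
      (sqrt (2 * pi * \<sigma>\<^sup>2) * (2^k * \<sigma>^(2 * k + 1) * fact k * sqrt (2 / pi)))"
    by (rule has_bochner_integral_mult_right)
  moreover have "(\<lambda>x. sqrt (2 * pi * \<sigma>\<^sup>2) * (normal_density 0 \<sigma> x * \<bar>x - 0\<bar> ^ (2 * k + 1))) = (\<lambda>x. \<bar>x\<bar> ^ (2 * k + 1) * exp (- (x\<^sup>2) / (2 * \<sigma>\<^sup>2)))"
    using nz unfolding normal_density_def by (intro ext) simp
  moreover have "sqrt (2 * pi * \<sigma>\<^sup>2) * (2^k * \<sigma>^(2 * k + 1) * fact k * sqrt (2 / pi)) = fact k * (2 * \<sigma>\<^sup>2) ^ (k + 1)"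
  proof -
    have "sqrt (2 * pi * \<sigma>\<^sup>2) * sqrt (2 / pi) = sqrt ((2 * \<sigma>)\<^sup>2)"
      unfolding real_sqrt_mult[symmetric] by (simp add: power2_eq_square field_simps)
    also have "\<dots> = 2 * \<sigma>" by (subst real_sqrt_abs) (use sp in simp)
    finally have e: "sqrt (2 * pi * \<sigma>\<^sup>2) * sqrt (2 / pi) = 2 * \<sigma>" .
    have "sqrt (2 * pi * \<sigma>\<^sup>2) * (2^k * \<sigma>^(2 * k + 1) * fact k * sqrt (2 / pi)) = (sqrt (2 * pi * \<sigma>\<^sup>2) * sqrt (2 / pi)) * (2^k * \<sigma>^(2 * k + 1) * fact k)"
      by (simp only: ac_simps)
    also have "\<dots> = 2 * \<sigma> * (2^k * \<sigma>^(2 * k + 1) * fact k)" by (simp only: e)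
    also have "\<dots> = fact k * (2 ^ (k + 1) * \<sigma> ^ (2 * k + 2))"
      by (simp add: power_add mult_ac)
    also have "\<dots> = fact k * (2 * \<sigma>\<^sup>2) ^ (k + 1)"
    proof -
      have "\<sigma> ^ (2 * k + 2) = \<sigma> ^ (2 * (k + 1))" by (simp add: algebra_simps)
      also have "\<dots> = (\<sigma>\<^sup>2) ^ (k + 1)" by (rule power_mult)
      finally show ?thesis by (simp add: power_mult_distrib)
    qed
    finally show ?thesis .
  qed
  ultimately show ?thesis unfolding s2 by (simp only:)
qed

definition psi :: "nat \<Rightarrow> real \<Rightarrow> real \<Rightarrow> real \<Rightarrow> complex" where
  "psi s a y x = complex_of_real ((if s = 0 then \<bar>x\<bar> else sgn x) * exp (- (x\<^sup>2) / y + x\<^sup>2 / (2 * a)))"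

lemma poly_sum_upto:
  fixes Q :: "complex poly"
  assumes "\<forall>j>m. coeff Q j = 0"
  shows "poly Q z = (\<Sum>j\<le>m. coeff Q j * z ^ j)"
proof -
  have d: "degree Q \<le> m" using assms by (intro degree_le) auto
  have "poly Q z = (\<Sum>j\<le>degree Q. coeff Q j * z ^ j)" by (rule poly_altdef)
  also have "\<dots> = (\<Sum>j\<le>m. coeff Q j * z ^ j)"
    using d by (intro sum.mono_neutral_left) (auto simp: coeff_eq_0)
  finally show ?thesis .
qed

lemma psi_Ef:
  assumes s: "s \<le> 1"
  shows "cnj (psi s a y x) * Ef s a Q x = complex_of_real (\<bar>x\<bar> * exp (- (x\<^sup>2) / y)) * poly Q (complex_of_real (x\<^sup>2))"
proof -
  have ee: "exp (- (x\<^sup>2) / y + x\<^sup>2 / (2 * a)) * exp (- (x\<^sup>2) / (2 * a)) = exp (- (x\<^sup>2) / y)"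
    by (simp add: exp_add[symmetric])
  have sg: "(if s = 0 then \<bar>x\<bar> else sgn x) * x ^ s = \<bar>x\<bar>"
    using s by (cases "s = 0") (auto simp: sgn_if le_Suc_eq)
  have "cnj (psi s a y x) * Ef s a Q x =
      complex_of_real ((if s = 0 then \<bar>x\<bar> else sgn x) * x ^ s * (exp (- (x\<^sup>2) / y + x\<^sup>2 / (2 * a)) * exp (- (x\<^sup>2) / (2 * a)))) * poly Q (complex_of_real (x\<^sup>2))"
    by (simp add: psi_def Ef_def gs_def mult_ac)
  also have "\<dots> = complex_of_real (\<bar>x\<bar> * exp (- (x\<^sup>2) / y)) * poly Q (complex_of_real (x\<^sup>2))"
    by (simp only: ee sg)
  finally show ?thesis .
qed

lemma pair_moment:
  assumes y: "0 < y" and s: "s \<le> 1" and Q: "\<forall>j>m. coeff Q j = 0"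
  shows "L2_inner (psi s a y) (Ef s a Q) = (\<Sum>j\<le>m. coeff Q j * complex_of_real (fact j * y ^ (j + 1)))"
proof -
  have pw: "cnj (psi s a y x) * Ef s a Q x = (\<Sum>j\<le>m. coeff Q j * complex_of_real (\<bar>x\<bar> ^ (2 * j + 1) * exp (- (x\<^sup>2) / y)))" for x
  proof -
    have "cnj (psi s a y x) * Ef s a Q x = complex_of_real (\<bar>x\<bar> * exp (- (x\<^sup>2) / y)) * (\<Sum>j\<le>m. coeff Q j * complex_of_real (x\<^sup>2) ^ j)"
      by (simp add: psi_Ef[OF s] poly_sum_upto[OF Q])
    also have "\<dots> = (\<Sum>j\<le>m. coeff Q j * (complex_of_real (\<bar>x\<bar> * exp (- (x\<^sup>2) / y)) * complex_of_real (x\<^sup>2) ^ j))"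
      by (simp add: sum_distrib_left mult_ac)
    also have "\<dots> = (\<Sum>j\<le>m. coeff Q j * complex_of_real (\<bar>x\<bar> ^ (2 * j + 1) * exp (- (x\<^sup>2) / y)))"
    proof (intro sum.cong refl)
      fix j
      have x2: "(x\<^sup>2) ^ j = \<bar>x\<bar> ^ (2 * j)" by (simp only: power_mult power2_abs)
      have r: "\<bar>x\<bar> * exp (- (x\<^sup>2) / y) * (x\<^sup>2) ^ j = \<bar>x\<bar> ^ (2 * j + 1) * exp (- (x\<^sup>2) / y)"
        unfolding x2 by (simp add: power_add mult_ac)
      have "complex_of_real (\<bar>x\<bar> * exp (- (x\<^sup>2) / y)) * complex_of_real (x\<^sup>2) ^ j
          = complex_of_real (\<bar>x\<bar> * exp (- (x\<^sup>2) / y) * (x\<^sup>2) ^ j)"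
        by (simp only: of_real_mult of_real_power)
      then show "coeff Q j * (complex_of_real (\<bar>x\<bar> * exp (- (x\<^sup>2) / y)) * complex_of_real (x\<^sup>2) ^ j)
          = coeff Q j * complex_of_real (\<bar>x\<bar> ^ (2 * j + 1) * exp (- (x\<^sup>2) / y))"
        by (simp only: r)
    qed
    finally show ?thesis .
  qed
  have "has_bochner_integral lborel (\<lambda>x. \<Sum>j\<le>m. coeff Q j * complex_of_real (\<bar>x\<bar> ^ (2 * j + 1) * exp (- (x\<^sup>2) / y)))
      (\<Sum>j\<le>m. coeff Q j * complex_of_real (fact j * y ^ (j + 1)))"
  proof (intro has_bochner_integral_sum has_bochner_integral_mult_right)
    fix j
    show "has_bochner_integral lborel (\<lambda>x. complex_of_real (\<bar>x\<bar> ^ (2 * j + 1) * exp (- (x\<^sup>2) / y))) (complex_of_real (fact j * y ^ (j + 1)))"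
      by (rule has_bochner_integral_of_real[OF gauss_moment_odd[OF y]])
  qed
  then show ?thesis unfolding L2_inner_def pw by (rule has_bochner_integral_integral_eq)
qed

lemma L2_psi:
  assumes a: "0 < a" and y: "0 < y" "y < 2 * a"
  shows "L2 (psi s a y)"
proof -
  define c where "c = 1 / (2 / y - 1 / a)"
  have cpos: "0 < c"
  proof -
    have "1 / a < 2 / y" using a y by (simp add: field_simps)
    then show ?thesis by (simp add: c_def)
  qed
  have [measurable]: "psi s a y \<in> borel_measurable lborel"
    unfolding psi_def by measurable
  have "integrable lborel (\<lambda>x. (cmod (psi s a y x))\<^sup>2)"
  proof (rule Bochner_Integration.integrable_bound)
    show "integrable lborel (\<lambda>x. \<bar>x\<bar> ^ 0 * exp (- (x\<^sup>2) / c) + \<bar>x\<bar> ^ 2 * exp (- (x\<^sup>2) / c))"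
      using cpos by (intro Bochner_Integration.integrable_add gauss_moment_integrable)
    show "(\<lambda>x. (cmod (psi s a y x))\<^sup>2) \<in> borel_measurable lborel" by measurable
    show "AE x in lborel. norm ((cmod (psi s a y x))\<^sup>2) \<le> norm (\<bar>x\<bar> ^ 0 * exp (- (x\<^sup>2) / c) + \<bar>x\<bar> ^ 2 * exp (- (x\<^sup>2) / c))"
    proof (intro AE_I2)
      fix x
      have e2: "(exp (- (x\<^sup>2) / y + x\<^sup>2 / (2 * a)))\<^sup>2 = exp (- (x\<^sup>2) / c)"
      proof -
        have "(exp (- (x\<^sup>2) / y + x\<^sup>2 / (2 * a)))\<^sup>2 = exp (2 * (- (x\<^sup>2) / y + x\<^sup>2 / (2 * a)))"
          by (simp add: power2_eq_square exp_add[symmetric])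
        also have "2 * (- (x\<^sup>2) / y + x\<^sup>2 / (2 * a)) = - (x\<^sup>2) / c"
          using a y by (simp add: c_def field_simps)
        finally show ?thesis .
      qed
      have f2: "((if s = 0 then \<bar>x\<bar> else sgn x))\<^sup>2 \<le> 1 + \<bar>x\<bar> ^ 2"
        by (auto simp: sgn_if)
      have "(cmod (psi s a y x))\<^sup>2 = ((if s = 0 then \<bar>x\<bar> else sgn x) * exp (- (x\<^sup>2) / y + x\<^sup>2 / (2 * a)))\<^sup>2"
        unfolding psi_def norm_of_real power2_abs ..
      also have "\<dots> = ((if s = 0 then \<bar>x\<bar> else sgn x))\<^sup>2 * exp (- (x\<^sup>2) / c)"
        by (simp only: power_mult_distrib e2)
      also have "\<dots> \<le> (1 + \<bar>x\<bar> ^ 2) * exp (- (x\<^sup>2) / c)"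
        by (intro mult_right_mono f2) auto
      finally show "norm ((cmod (psi s a y x))\<^sup>2) \<le> norm (\<bar>x\<bar> ^ 0 * exp (- (x\<^sup>2) / c) + \<bar>x\<bar> ^ 2 * exp (- (x\<^sup>2) / c))"
        by (simp add: algebra_simps)
    qed
  qed
  then show ?thesis by (simp add: L2_def)
qed

lemma pair_conv:
  assumes Lp: "L2 \<psi>" and LS: "\<And>N. L2 (S N)" and Ll: "L2 l" and T: "L2_tendsto S l"
  shows "(\<lambda>N. L2_inner \<psi> (S N)) \<longlonglongrightarrow> L2_inner \<psi> l"
proof -
  define h where "h N x = S N x - l x" for N x
  have Lh: "L2 (h N)" for N unfolding h_def by (intro L2_diff LS Ll)
  define n where "n N = (LINT x|lborel. (cmod (h N x))\<^sup>2)" for N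
  define A where "A = (LINT x|lborel. (cmod (\<psi> x))\<^sup>2)"
  have n0: "0 \<le> n N" for N unfolding n_def by simp
  have A0: "0 \<le> A" unfolding A_def by simp
  have sq: "(\<lambda>N. sqrt (n N)) \<longlonglongrightarrow> 0" using T by (simp add: L2_tendsto_def n_def h_def)
  have key: "norm (L2_inner \<psi> (h N)) \<le> ((sqrt (n N) + inverse (real (Suc N))) * A + sqrt (n N)) / 2" for N
  proof -
    define s where "s = sqrt (n N) + inverse (real (Suc N))"
    have s0: "0 < s" unfolding s_def using n0[of N] by (intro add_nonneg_pos) auto
    have i0: "integrable lborel (\<lambda>x. cnj (\<psi> x) * h N x)" by (rule L2_inner_integrable[OF Lp Lh])
    have i1: "integrable lborel (\<lambda>x. cmod (\<psi> x) * cmod (h N x))"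
      using integrable_norm[OF i0] by (simp add: norm_mult)
    have i2: "integrable lborel (\<lambda>x. (s * (cmod (\<psi> x))\<^sup>2 + (cmod (h N x))\<^sup>2 / s) / 2)"
      using Lp Lh by (intro integrable_divide Bochner_Integration.integrable_add integrable_mult_right) (auto simp: L2_def)
    have "norm (L2_inner \<psi> (h N)) \<le> (LINT x|lborel. norm (cnj (\<psi> x) * h N x))"
      unfolding L2_inner_def by (rule integral_norm_bound)
    also have "\<dots> = (LINT x|lborel. cmod (\<psi> x) * cmod (h N x))" by (simp add: norm_mult)
    also have "\<dots> \<le> (LINT x|lborel. (s * (cmod (\<psi> x))\<^sup>2 + (cmod (h N x))\<^sup>2 / s) / 2)"
    proof (rule integral_mono[OF i1 i2])
      fix x
      define p where "p = cmod (\<psi> x)"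
      define q where "q = cmod (h N x)"
      have "0 \<le> (s * p - q)\<^sup>2" by simp
      then have "2 * s * (p * q) \<le> s\<^sup>2 * p\<^sup>2 + q\<^sup>2" by (simp add: power2_eq_square algebra_simps)
      then have "p * q \<le> (s\<^sup>2 * p\<^sup>2 + q\<^sup>2) / (2 * s)" using s0 by (simp add: pos_le_divide_eq mult_ac)
      also have "(s\<^sup>2 * p\<^sup>2 + q\<^sup>2) / (2 * s) = (s * p\<^sup>2 + q\<^sup>2 / s) / 2"
        using s0 by (simp add: field_simps power2_eq_square)
      finally show "cmod (\<psi> x) * cmod (h N x) \<le> (s * (cmod (\<psi> x))\<^sup>2 + (cmod (h N x))\<^sup>2 / s) / 2"
        by (simp add: p_def q_def)
    qed
    also have "\<dots> = (s * A + n N / s) / 2"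
      using Lp Lh by (simp add: A_def n_def L2_def)
    also have "\<dots> \<le> (s * A + sqrt (n N)) / 2"
    proof -
      have "sqrt (n N) \<le> s" unfolding s_def by simp
      then have "sqrt (n N) * sqrt (n N) \<le> sqrt (n N) * s" using n0[of N] by (intro mult_left_mono) auto
      then have "n N \<le> sqrt (n N) * s" using n0[of N] by (simp add: real_sqrt_mult_self)
      then have "n N / s \<le> sqrt (n N)" using s0 by (simp add: pos_divide_le_eq)
      then show ?thesis by (intro divide_right_mono add_left_mono) auto
    qed
    finally show ?thesis by (simp add: s_def)
  qed
  have lim: "(\<lambda>N. ((sqrt (n N) + inverse (real (Suc N))) * A + sqrt (n N)) / 2) \<longlonglongrightarrow> 0"
  proof -
    have t1: "(\<lambda>N. sqrt (n N) + inverse (real (Suc N))) \<longlonglongrightarrow> 0"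
      using tendsto_add[OF sq LIMSEQ_inverse_real_of_nat] by simp
    have t2: "(\<lambda>N. (sqrt (n N) + inverse (real (Suc N))) * A) \<longlonglongrightarrow> 0"
      by (rule tendsto_mult_left_zero[OF t1])
    have t3: "(\<lambda>N. (sqrt (n N) + inverse (real (Suc N))) * A + sqrt (n N)) \<longlonglongrightarrow> 0"
      using tendsto_add[OF t2 sq] by simp
    show ?thesis by (rule tendsto_divide_zero[OF t3])
  qed
  have z: "(\<lambda>N. L2_inner \<psi> (h N)) \<longlonglongrightarrow> 0"
    by (rule Lim_null_comparison[OF _ lim]) (use key in auto)
  have "L2_inner \<psi> (h N) = L2_inner \<psi> (S N) - L2_inner \<psi> l" for N
    unfolding L2_inner_def h_def
    by (simp add: right_diff_distrib Bochner_Integration.integral_diff[OF L2_inner_integrable[OF Lp LS] L2_inner_integrable[OF Lp Ll]])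
  then have "(\<lambda>N. L2_inner \<psi> (S N) - L2_inner \<psi> l) \<longlonglongrightarrow> 0" using z by simp
  then have "(\<lambda>N. (L2_inner \<psi> (S N) - L2_inner \<psi> l) + L2_inner \<psi> l) \<longlonglongrightarrow> 0 + L2_inner \<psi> l"
    by (intro tendsto_add tendsto_const)
  then show ?thesis by simp
qed


lemma conv_cancel:
  fixes c :: complex
  assumes "convergent (\<lambda>N. Y N * c)" "c \<noteq> 0"
  shows "convergent Y"
proof -
  from assms(1) obtain L where "(\<lambda>N. Y N * c) \<longlonglongrightarrow> L" by (auto simp: convergent_def)
  then have "(\<lambda>N. Y N * c * inverse c) \<longlonglongrightarrow> L * inverse c" by (rule tendsto_mult_right)
  moreover have "(\<lambda>N. Y N * c * inverse c) = Y" using assms(2) by (simp add: fun_eq_iff)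
  ultimately have "Y \<longlonglongrightarrow> L * inverse c" by simp
  then show ?thesis by (auto simp: convergent_def)
qed

lemma main_contra:
  fixes T :: "(cfun \<times> cfun) set" and H :: "cfun \<Rightarrow> bool"
  assumes eps: "0 < \<epsilon>" and s: "s \<le> 1"
    and step: "\<And>y v Q. (y, v) \<in> T \<Longrightarrow> AE x in lborel. y x = Ef s (sqrt \<epsilon>) Q x \<Longrightarrow> AE x in lborel. v x = Ef s (sqrt \<epsilon>) (Mop (sqrt \<epsilon>) Q) x"
    and TL2: "\<And>y v. (y, v) \<in> T \<Longrightarrow> L2 v"
    and fE: "f = Ef s (sqrt \<epsilon>) P" and P0: "P \<noteq> 0"
    and fS: "f \<in> S_dom T H \<epsilon>"
  shows False
proof -
  define a where "a = sqrt \<epsilon>"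
  have a: "0 < a" using eps by (simp add: a_def)
  note step' = step[unfolded a_def[symmetric]]
  define m where "m = degree P"
  have Pm: "\<forall>j>m. coeff P j = 0" by (simp add: m_def coeff_eq_0)
  have lead: "coeff P m \<noteq> 0" using P0 by (simp add: m_def)
  define Pk where "Pk k = (Mop a ^^ k) P" for k
  have Pkc: "(\<forall>j>m. coeff (Pk k) j = 0) \<and> coeff (Pk k) m = (\<i> / complex_of_real a) ^ k * coeff P m" for k
    unfolding Pk_def by (rule Mop_pow_coeff[OF Pm])
  define cf where "cf n = (-1) ^ n / real (2 * n + 1) * sqrt \<epsilon> ^ (2 * n + 1)" for n :: nat
  from fS have "\<exists>v. (\<forall>n. (f, v n) \<in> T ^^ (2 * n + 1)) \<and>
      (\<exists>l. L2 l \<and> L2_tendsto (\<lambda>N x. \<Sum>n\<le>N. complex_of_real (cf n) * v n x) l)"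
    unfolding S_dom_def cf_def by (simp only: mem_Collect_eq)
  then obtain v l where vT: "\<And>n. (f, v n) \<in> T ^^ (2 * n + 1)" and Ll: "L2 l"
     and tl: "L2_tendsto (\<lambda>N x. \<Sum>n\<le>N. complex_of_real (cf n) * v n x) l"
    by blast
  have fAE: "AE x in lborel. f x = Ef s a P x" using fE by (simp add: a_def)
  have vE: "AE x in lborel. v n x = Ef s a (Pk (2 * n + 1)) x" for n
    unfolding Pk_def by (rule chain[where T=T, OF step' vT fAE])
  have Lv: "L2 (v n)" for n
  proof -
    have "(f, v n) \<in> T ^^ Suc (2 * n)" using vT[of n] unfolding Suc_eq_plus1 .
    from relpow_last[OF this] obtain y where "(y, v n) \<in> T" by blast
    then show ?thesis by (rule TL2)
  qed
  define S where "S N x = (\<Sum>n\<le>N. complex_of_real (cf n) * v n x)" for N x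
  have LS: "L2 (S N)" for N unfolding S_def by (intro L2_sum L2_scale Lv)
  have tS: "L2_tendsto S l" unfolding S_def using tl .
  define R where "R N = (\<Sum>n\<le>N. smult (complex_of_real (cf n)) (Pk (2 * n + 1)))" for N
  have SR: "AE x in lborel. S N x = Ef s a (R N) x" for N
  proof -
    have "AE x in lborel. \<forall>n. v n x = Ef s a (Pk (2 * n + 1)) x"
      using vE by (simp add: AE_all_countable)
    then show ?thesis
    proof eventually_elim
      case (elim x)
      then show ?case by (simp add: S_def R_def Ef_lin)
    qed
  qed
  have Rc: "\<forall>j>m. coeff (R N) j = 0" for N
    using Pkc by (simp add: R_def coeff_sum)
  have Rm: "coeff (R N) m = \<i> * coeff P m * (\<Sum>n\<le>N. complex_of_real (1 / real (2 * n + 1)))" for N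
  proof -
    have "coeff (R N) m = (\<Sum>n\<le>N. complex_of_real (cf n) * ((\<i> / complex_of_real a) ^ (2 * n + 1) * coeff P m))"
      using Pkc by (simp add: R_def coeff_sum)
    also have "\<dots> = (\<Sum>n\<le>N. \<i> * coeff P m * complex_of_real (1 / real (2 * n + 1)))"
    proof (intro sum.cong refl)
      fix n
      have eq: "complex_of_real (cf n) * (\<i> / complex_of_real a) ^ (2 * n + 1) = \<i> * complex_of_real (1 / real (2 * n + 1))"
        unfolding cf_def a_def by (rule coef_id[OF eps])
      have e: "complex_of_real (cf n) * ((\<i> / complex_of_real a) ^ (2 * n + 1) * coeff P m) = (complex_of_real (cf n) * (\<i> / complex_of_real a) ^ (2 * n + 1)) * coeff P m"
        by (rule mult.assoc[symmetric])
      show "complex_of_real (cf n) * ((\<i> / complex_of_real a) ^ (2 * n + 1) * coeff P m) = \<i> * coeff P m * complex_of_real (1 / real (2 * n + 1))"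
        unfolding e eq by (simp only: mult_ac)
    qed
    also have "\<dots> = \<i> * coeff P m * (\<Sum>n\<le>N. complex_of_real (1 / real (2 * n + 1)))"
      by (simp add: sum_distrib_left)
    finally show ?thesis .
  qed
  define z where "z N j = coeff (R N) j * complex_of_real (fact j)" for N j
  define F where "F N y = (\<Sum>j\<le>m. z N j * complex_of_real (y ^ (j + 1)))" for N y
  have convF: "convergent (\<lambda>N. F N y)" if y: "0 < y" "y < 2 * a" for y
  proof -
    have Lp: "L2 (psi s a y)" by (rule L2_psi[OF a y])
    have lim: "(\<lambda>N. L2_inner (psi s a y) (S N)) \<longlonglongrightarrow> L2_inner (psi s a y) l"
      by (rule pair_conv[OF Lp LS Ll tS])
    have "L2_inner (psi s a y) (S N) = F N y" for N
    proof -
      have "L2_inner (psi s a y) (S N) = L2_inner (psi s a y) (Ef s a (R N))"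
        unfolding L2_inner_def
      proof (rule integral_cong_AE)
        have [measurable]: "psi s a y \<in> borel_measurable lborel" using Lp by (simp add: L2_def)
        have [measurable]: "S N \<in> borel_measurable lborel" using LS by (simp add: L2_def)
        have [measurable]: "Ef s a (R N) \<in> borel_measurable lborel" using L2_Ef[OF a] by (simp add: L2_def)
        show "(\<lambda>x. cnj (psi s a y x) * S N x) \<in> borel_measurable lborel" by measurable
        show "(\<lambda>x. cnj (psi s a y x) * Ef s a (R N) x) \<in> borel_measurable lborel" by measurable
        show "AE x in lborel. cnj (psi s a y x) * S N x = cnj (psi s a y x) * Ef s a (R N) x"
          using SR[of N] by eventually_elim simp
      qed
      also have "\<dots> = (\<Sum>j\<le>m. coeff (R N) j * complex_of_real (fact j * y ^ (j + 1)))"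
        by (rule pair_moment[OF y(1) s Rc])
      also have "\<dots> = F N y" by (simp add: F_def z_def mult_ac)
      finally show ?thesis .
    qed
    then show ?thesis using lim by (auto simp: convergent_def)
  qed
  define q :: real where "q = 1 / 2"
  have q: "0 < q" "q < 1" by (auto simp: q_def)
  have "convergent (\<lambda>N. qd q m (F N) a)"
    by (rule qd_conv[OF q convF]) (use a in auto)
  moreover have "qd q m (F N) a = z N m * complex_of_real (pk q m m * a ^ (m + 1))" for N
    unfolding F_def by (rule qd_top[OF q])
  ultimately have c1: "convergent (\<lambda>N. z N m * complex_of_real (pk q m m * a ^ (m + 1)))" by simp
  have "complex_of_real (pk q m m * a ^ (m + 1)) \<noteq> 0" using pk_nonzero[OF q, of m] a by simp
  then have c2: "convergent (\<lambda>N. z N m)" by (rule conv_cancel[OF c1])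
  have zm: "z N m = (\<Sum>n\<le>N. complex_of_real (1 / real (2 * n + 1))) * (\<i> * coeff P m * complex_of_real (fact m))" for N
    by (simp add: z_def Rm mult_ac)
  have "\<i> * coeff P m * complex_of_real (fact m) \<noteq> 0" using lead by simp
  then have "convergent (\<lambda>N. \<Sum>n\<le>N. complex_of_real (1 / real (2 * n + 1)))"
    by (rule conv_cancel[OF c2[unfolded zm]])
  then obtain L where "(\<lambda>N. \<Sum>n\<le>N. complex_of_real (1 / real (2 * n + 1))) \<longlonglongrightarrow> L" by (auto simp: convergent_def)
  then have "(\<lambda>N. Re (\<Sum>n\<le>N. complex_of_real (1 / real (2 * n + 1)))) \<longlonglongrightarrow> Re L" by (rule tendsto_Re)
  then have "convergent (\<lambda>N. \<Sum>n\<le>N. 1 / real (2 * n + 1))" by (auto simp: convergent_def)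
  then have "summable (\<lambda>n. 1 / real (2 * n + 1))" by (simp add: summable_iff_convergent')
  then show False using not_summable_odd by simp
qed


lemma parity_zero:
  fixes p :: "complex poly" and \<sigma> :: complex
  assumes ae: "AE x in lborel. poly p (- complex_of_real x) = \<sigma> * poly p (complex_of_real x)"
  shows "pcompose p [:0, -1:] = smult \<sigma> p"
proof (rule ccontr)
  define q where "q = pcompose p [:0, -1:] - smult \<sigma> p"
  assume "pcompose p [:0, -1:] \<noteq> smult \<sigma> p"
  then have q0: "q \<noteq> 0" by (simp add: q_def)
  have pq: "poly q (complex_of_real x) = poly p (- complex_of_real x) - \<sigma> * poly p (complex_of_real x)" for x
    by (simp add: q_def poly_pcompose)
  define Z where "Z = {x::real. poly q (complex_of_real x) = 0}"
  have "finite {z. poly q z = 0}" by (rule poly_roots_finite[OF q0])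
  then have "finite (complex_of_real -` {z. poly q z = 0})"
    by (rule finite_vimageI) (rule inj_of_real)
  then have fZ: "finite Z" by (simp add: Z_def vimage_def)
  have "AE x in lborel. x \<in> Z" using ae by eventually_elim (simp add: Z_def pq)
  moreover have "AE x in lborel. x \<notin> Z"
    using finite_imp_null_set_lborel[OF fZ] by (rule AE_not_in)
  ultimately have "AE x in lborel. x \<in> Z \<and> x \<notin> Z" by (rule AE_conjI)
  then have "AE (x::real) in lborel. False" by simp
  then have "emeasure lborel (UNIV :: real set) = 0"
    by (subst (asm) AE_iff_measurable[of UNIV]) auto
  then show False by simp
qed

lemma sum_split_even_odd':
  fixes f g :: "nat \<Rightarrow> 'a::comm_monoid_add"
  shows "(\<Sum>i<2 * n. if even i then f i else g i) = (\<Sum>i<n. f (2 * i)) + (\<Sum>i<n. g (2 * i + 1))"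
proof (induct n)
  case 0
  then show ?case by simp
next
  case (Suc n)
  have "(\<Sum>i<2 * Suc n. if even i then f i else g i) =
    (\<Sum>i<n. f (2 * i)) + (\<Sum>i<n. g (2 * i + 1)) + (f (2 * n) + g (2 * n + 1))"
    using Suc.hyps unfolding One_nat_def by (auto simp: ac_simps)
  also have "\<dots> = (\<Sum>i<Suc n. f (2 * i)) + (\<Sum>i<Suc n. g (2 * i + 1))"
    by (auto simp: ac_simps)
  finally show ?case .
qed

lemma even_form:
  fixes p :: "complex poly"
  assumes odd0: "\<And>n. odd n \<Longrightarrow> coeff p n = 0"
  shows "\<exists>P. \<forall>z. poly p z = poly P (z\<^sup>2)"
proof -
  define d where "d = degree p"
  define P where "P = (\<Sum>j<Suc d. monom (coeff p (2 * j)) j)"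
  have "poly p z = poly P (z\<^sup>2)" for z
  proof -
    have "poly p z = (\<Sum>n\<le>d. coeff p n * z ^ n)" by (simp add: poly_altdef d_def)
    also have "\<dots> = (\<Sum>n<2 * Suc d. coeff p n * z ^ n)"
      by (intro sum.mono_neutral_left) (auto simp: d_def coeff_eq_0)
    also have "\<dots> = (\<Sum>n<2 * Suc d. if even n then coeff p n * z ^ n else coeff p n * z ^ n)" by simp
    also have "\<dots> = (\<Sum>j<Suc d. coeff p (2 * j) * z ^ (2 * j)) + (\<Sum>j<Suc d. coeff p (2 * j + 1) * z ^ (2 * j + 1))"
      by (rule sum_split_even_odd')
    also have "(\<Sum>j<Suc d. coeff p (2 * j + 1) * z ^ (2 * j + 1)) = 0"
      using odd0 by (intro sum.neutral) auto
    also have "(\<Sum>j<Suc d. coeff p (2 * j) * z ^ (2 * j)) = poly P (z\<^sup>2)"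
      by (simp add: P_def poly_sum poly_monom power_mult)
    finally show ?thesis by simp
  qed
  then show ?thesis by blast
qed

lemma odd_form:
  fixes p :: "complex poly"
  assumes even0: "\<And>n. even n \<Longrightarrow> coeff p n = 0"
  shows "\<exists>P. \<forall>z. poly p z = z * poly P (z\<^sup>2)"
proof -
  define d where "d = degree p"
  define P where "P = (\<Sum>j<Suc d. monom (coeff p (2 * j + 1)) j)"
  have "poly p z = z * poly P (z\<^sup>2)" for z
  proof -
    have "poly p z = (\<Sum>n\<le>d. coeff p n * z ^ n)" by (simp add: poly_altdef d_def)
    also have "\<dots> = (\<Sum>n<2 * Suc d. coeff p n * z ^ n)"
      by (intro sum.mono_neutral_left) (auto simp: d_def coeff_eq_0)
    also have "\<dots> = (\<Sum>n<2 * Suc d. if even n then coeff p n * z ^ n else coeff p n * z ^ n)" by simp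
    also have "\<dots> = (\<Sum>j<Suc d. coeff p (2 * j) * z ^ (2 * j)) + (\<Sum>j<Suc d. coeff p (2 * j + 1) * z ^ (2 * j + 1))"
      by (rule sum_split_even_odd')
    also have "(\<Sum>j<Suc d. coeff p (2 * j) * z ^ (2 * j)) = 0"
      using even0 by (intro sum.neutral) auto
    also have "(\<Sum>j<Suc d. coeff p (2 * j + 1) * z ^ (2 * j + 1)) = (\<Sum>j<Suc d. z * (coeff p (2 * j + 1) * (z\<^sup>2) ^ j))"
    proof (intro sum.cong refl)
      fix j
      have e: "z ^ (2 * j + 1) = (z\<^sup>2) ^ j * z" by (simp only: power_add power_one_right power_mult)
      show "coeff p (2 * j + 1) * z ^ (2 * j + 1) = z * (coeff p (2 * j + 1) * (z\<^sup>2) ^ j)"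
        unfolding e by (simp only: mult_ac)
    qed
    also have "\<dots> = z * (\<Sum>j<Suc d. coeff p (2 * j + 1) * (z\<^sup>2) ^ j)"
      by (rule sum_distrib_left[symmetric])
    also have "\<dots> = z * poly P (z\<^sup>2)"
      by (simp add: P_def poly_sum poly_monom)
    finally show ?thesis by simp
  qed
  then show ?thesis by blast
qed

lemma K_poly:
  assumes "f \<in> K_space \<epsilon>"
  shows "\<exists>p. f = (\<lambda>x. poly p (complex_of_real x) * gs (sqrt \<epsilon>) x)"
proof -
  from assms obtain N c where f: "f = (\<lambda>x. \<Sum>n<N. c n * complex_of_real (x ^ n * exp (- (x\<^sup>2) / (2 * sqrt \<epsilon>))))"
    by (auto simp: K_space_def)
  define p where "p = (\<Sum>n<N. monom (c n) n)"
  have "f = (\<lambda>x. poly p (complex_of_real x) * gs (sqrt \<epsilon>) x)"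
    by (simp add: f p_def poly_sum poly_monom gs_def sum_distrib_right mult_ac)
  then show ?thesis by blast
qed

lemma gs_even: "gs a (- x) = gs a x" by (simp add: gs_def)
lemma gs_nz: "gs a x \<noteq> 0" by (simp add: gs_def)

lemma K_even:
  assumes "f \<in> K_space \<epsilon>" "L2_even f"
  shows "\<exists>P. f = Ef 0 (sqrt \<epsilon>) P"
proof -
  obtain p where f: "f = (\<lambda>x. poly p (complex_of_real x) * gs (sqrt \<epsilon>) x)" using K_poly[OF assms(1)] by blast
  have "AE x in lborel. f (- x) = f x" using assms(2) by (simp add: L2_even_def)
  then have "AE x in lborel. poly p (- complex_of_real x) = 1 * poly p (complex_of_real x)"
    by eventually_elim (simp add: f gs_even gs_nz)
  then have pc: "pcompose p [:0, -1:] = smult 1 p" by (rule parity_zero)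
  have "coeff p n = 0" if "odd n" for n
  proof -
    have "coeff (pcompose p [:0, -1:]) n = coeff p n" using pc by simp
    then show ?thesis using that by (simp add: coeff_pcompose_linear)
  qed
  then obtain P where P: "\<And>z. poly p z = poly P (z\<^sup>2)" using even_form by blast
  have "f = Ef 0 (sqrt \<epsilon>) P" by (simp add: f Ef_def P fun_eq_iff)
  then show ?thesis by blast
qed

lemma K_odd:
  assumes "f \<in> K_space \<epsilon>" "L2_odd f"
  shows "\<exists>P. f = Ef 1 (sqrt \<epsilon>) P"
proof -
  obtain p where f: "f = (\<lambda>x. poly p (complex_of_real x) * gs (sqrt \<epsilon>) x)" using K_poly[OF assms(1)] by blast
  have "AE x in lborel. f (- x) = - f x" using assms(2) by (simp add: L2_odd_def)
  then have "AE x in lborel. poly p (- complex_of_real x) = (-1) * poly p (complex_of_real x)"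
  proof eventually_elim
    case (elim x)
    then have "(poly p (- complex_of_real x) + poly p (complex_of_real x)) * gs (sqrt \<epsilon>) x = 0"
      by (simp add: f gs_even algebra_simps)
    then have "poly p (- complex_of_real x) + poly p (complex_of_real x) = 0" using gs_nz by simp
    then show ?case by (simp add: eq_neg_iff_add_eq_0)
  qed
  then have pc: "pcompose p [:0, -1:] = smult (-1) p" by (rule parity_zero)
  have "coeff p n = 0" if "even n" for n
  proof -
    have "coeff (pcompose p [:0, -1:]) n = - coeff p n" using pc by simp
    then show ?thesis using that by (simp add: coeff_pcompose_linear)
  qed
  then obtain P where P: "\<And>z. poly p z = z * poly P (z\<^sup>2)" using odd_form by blast
  have "f = Ef 1 (sqrt \<epsilon>) P" by (simp add: f Ef_def P fun_eq_iff)
  then show ?thesis by blast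
qed

lemma zero_pow: "(a, a) \<in> T \<Longrightarrow> (a, a) \<in> T ^^ k"
  by (induction k) auto

lemma zero_S_dom:
  assumes "((\<lambda>x::real. 0::complex), (\<lambda>x::real. 0::complex)) \<in> T" "H (\<lambda>x. 0)"
  shows "(\<lambda>x. 0) \<in> S_dom T H \<epsilon>"
  unfolding S_dom_def mem_Collect_eq
  apply (rule conjI)
   apply (rule assms(2))
  apply (rule exI[of _ "\<lambda>n x. 0"])
  apply (rule conjI)
   apply (intro allI)
   apply (rule zero_pow[OF assms(1)])
  apply (rule exI[of _ "\<lambda>x. 0"])
  apply (simp add: L2_zero L2_tendsto_def)
  done

lemma zero_t: "((\<lambda>x::real. 0::complex), (\<lambda>x::real. 0::complex)) \<in> t_graph"
proof -
  have "((\<lambda>x::real. 0::complex), (\<lambda>x::real. 0::complex)) \<in> p_graph"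
    unfolding p_graph_def
    by (auto simp: L2_zero intro!: exI[of _ "\<lambda>x. 0"])
  moreover have "((\<lambda>x::real. 0::complex), (\<lambda>x::real. 0::complex)) \<in> qinv_graph"
    by (simp add: qinv_graph_def L2_zero)
  ultimately show ?thesis unfolding t_graph_def by blast
qed

lemma zero_tadj: "((\<lambda>x::real. 0::complex), (\<lambda>x::real. 0::complex)) \<in> t_adj_graph"
  by (simp add: t_adj_graph_def L2_zero L2_inner_def)

lemma t_L2: "(y, v) \<in> t_graph \<Longrightarrow> L2 v"
  by (auto simp: t_graph_def qinv_graph_def)

lemma tadj_L2: "(y, v) \<in> t_adj_graph \<Longrightarrow> L2 v"
  by (simp add: t_adj_graph_def)

lemma Ef_zero: "Ef s a 0 = (\<lambda>x. 0)"
  by (simp add: Ef_def fun_eq_iff)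

theorem theorem3p9:
  fixes \<epsilon> :: real
  assumes "0 < \<epsilon>" and "\<epsilon> \<le> 1"
  shows "K_space \<epsilon> \<inter> S_dom t_graph L2_even \<epsilon> = {(\<lambda>x. 0)}
       \<and> K_space \<epsilon> \<inter> S_dom t_adj_graph L2_odd \<epsilon> = {(\<lambda>x. 0)}"
proof -
  have eps: "0 < \<epsilon>" by (rule assms(1))
  have a: "0 < sqrt \<epsilon>" using eps by simp
  have z0: "(\<lambda>x. 0) \<in> K_space \<epsilon>"
    unfolding K_space_def by (intro CollectI exI[of _ 0]) simp
  have ev0: "L2_even (\<lambda>x. 0)" by (simp add: L2_even_def L2_zero)
  have od0: "L2_odd (\<lambda>x. 0)" by (simp add: L2_odd_def L2_zero)
  have part1: "K_space \<epsilon> \<inter> S_dom t_graph L2_even \<epsilon> = {(\<lambda>x. 0)}"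
  proof
    show "{(\<lambda>x. 0)} \<subseteq> K_space \<epsilon> \<inter> S_dom t_graph L2_even \<epsilon>"
      using z0 zero_S_dom[where H=L2_even, OF zero_t ev0] by auto
    show "K_space \<epsilon> \<inter> S_dom t_graph L2_even \<epsilon> \<subseteq> {(\<lambda>x. 0)}"
    proof
      fix f assume f: "f \<in> K_space \<epsilon> \<inter> S_dom t_graph L2_even \<epsilon>"
      then have "L2_even f" by (simp add: S_dom_def)
      then obtain P where fP: "f = Ef 0 (sqrt \<epsilon>) P" using K_even f by blast
      show "f \<in> {(\<lambda>x. 0)}"
      proof (cases "P = 0")
        case True then show ?thesis using fP by (simp add: Ef_zero)
      next
        case False
        have False
          by (rule main_contra[OF eps _ t_step_even[OF a] t_L2 fP False]) (use f in auto)
        then show ?thesis ..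
      qed
    qed
  qed
  have part2: "K_space \<epsilon> \<inter> S_dom t_adj_graph L2_odd \<epsilon> = {(\<lambda>x. 0)}"
  proof
    show "{(\<lambda>x. 0)} \<subseteq> K_space \<epsilon> \<inter> S_dom t_adj_graph L2_odd \<epsilon>"
      using z0 zero_S_dom[where H=L2_odd, OF zero_tadj od0] by auto
    show "K_space \<epsilon> \<inter> S_dom t_adj_graph L2_odd \<epsilon> \<subseteq> {(\<lambda>x. 0)}"
    proof
      fix f assume f: "f \<in> K_space \<epsilon> \<inter> S_dom t_adj_graph L2_odd \<epsilon>"
      then have "L2_odd f" by (simp add: S_dom_def)
      then obtain P where fP: "f = Ef 1 (sqrt \<epsilon>) P" using K_odd f by blast
      show "f \<in> {(\<lambda>x. 0)}"
      proof (cases "P = 0")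
        case True then show ?thesis using fP by (simp add: Ef_zero)
      next
        case False
        have False
          by (rule main_contra[OF eps _ t_step_odd[OF a] tadj_L2 fP False]) (use f in auto)
        then show ?thesis ..
      qed
    qed
  qed
  show ?thesis using part1 part2 by blast
qed


end
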